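(* Let $\rho$ be a probability distribution on $\mathbb{R}^d\times\mathbb{R}$ with $\mathbb{E}\|a\|^2<\infty$, $H=\mathbb{E}[aa^\top]$ invertible with largest eigenvalue $L$. Assume there are finite constants $R,\tilde\kappa$ with $\mathbb{E}[\|a\|^2aa^\top]\preccurlyeq R^2H$ and $\mathbb{E}[\|a\|^2_{H^{-1}}aa^\top]\preccurlyeq\tilde\kappa H$, and let $\alpha,\beta>0$ satisfy $(\alpha+2\beta)R^2\le1$ and $\alpha\le\frac{\beta}{2\tilde\kappa}$. With the operators defined in the context: (a) if $0<\alpha,\beta<1/L$, then $(\mathcal{I}-\tilde{\mathcal{T}})^{-1}$ exists; (b) $\mathcal{M}\circ(\mathcal{I}-\tilde{\mathcal{T}})^{-1}\circ\mathcal{N}\preccurlyeq\frac23\mathcal{N}$, and $(\mathcal{I}-\mathcal{T})^{-1}\circ\mathcal{N}$ exists; (c) $\mathcal{M}^\top\circ(\mathcal{I}-\tilde{\mathcal{T}}^\top)^{-1}\circ\Upsilon\preccurlyeq\frac23\Upsilon$.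
   Context: $\preccurlyeq$ is the Loewner order, $\|a\|^2_{H^{-1}}=a^\top H^{-1}a$. For $a$ distributed as the marginal of $\rho$, let $\mathcal{J}=\begin{bmatrix} I-\beta aa^\top & I-\beta aa^\top\\ -\alpha aa^\top & I-\alpha aa^\top\end{bmatrix}$ and $A=\mathbb{E}[\mathcal{J}]=\begin{bmatrix}I-\beta H&I-\beta H\\-\alpha H&I-\alpha H\end{bmatrix}$. For $2d\times2d$ matrices $\Theta$ define the linear operators $\mathcal{T}(\Theta)=\mathbb{E}[\mathcal{J}\Theta\mathcal{J}^\top]$, $\tilde{\mathcal{T}}(\Theta)=A\Theta A^\top$, $\mathcal{M}(\Theta)=\mathbb{E}[(\mathcal{J}-A)\Theta(\mathcal{J}-A)^\top]$, and their transposes $\tilde{\mathcal{T}}^\top(\Theta)=A^\top\Theta A$, $\mathcal{M}^\top(\Theta)=\mathbb{E}[(\mathcal{J}-A)^\top\Theta(\mathcal{J}-A)]$; $\mathcal{I}$ is the identity operator, $\circ$ denotes composition/application, and "$(\mathcal{I}-\mathcal{T})^{-1}\circ\mathcal{N}$ exists" means the series $\sum_{t\ge0}\mathcal{T}^t(\mathcal{N})$ converges. Also $\Upsilon=\begin{bmatrix}H&H\\H&H\end{bmatrix}$ and $\mathcal{N}=\begin{bmatrix}\beta^2H&\alpha\beta H\\ \alpha\beta H&\alpha^2H\end{bmatrix}$. *)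

theory Defs
  imports "HOL-Probability.Probability"
begin

definition outer :: "real^'d \<Rightarrow> real^'d^'d" where
  "outer a = (\<chi> i j. a$i * a$j)"

definition loewner_le :: "real^'n^'n \<Rightarrow> real^'n^'n \<Rightarrow> bool" where
  "loewner_le A B \<longleftrightarrow> (\<forall>x. x \<bullet> (A *v x) \<le> x \<bullet> (B *v x))"

definition blockm :: "real^'d^'d \<Rightarrow> real^'d^'d \<Rightarrow> real^'d^'d \<Rightarrow> real^'d^'d
    \<Rightarrow> real^('d+'d)^('d+'d)" where
  "blockm P Q R S = (\<chi> i j. case i of
      Inl i' \<Rightarrow> (case j of Inl j' \<Rightarrow> P$i'$j' | Inr j' \<Rightarrow> Q$i'$j')
    | Inr i' \<Rightarrow> (case j of Inl j' \<Rightarrow> R$i'$j' | Inr j' \<Rightarrow> S$i'$j'))"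

definition Hmat :: "((real^'d) \<times> real) measure \<Rightarrow> real^'d^'d" where
  "Hmat \<rho> = integral\<^sup>L \<rho> (\<lambda>z. outer (fst z))"

definition Jmat :: "real \<Rightarrow> real \<Rightarrow> real^'d \<Rightarrow> real^('d+'d)^('d+'d)" where
  "Jmat \<alpha> \<beta> a = blockm (mat 1 - \<beta> *\<^sub>R outer a) (mat 1 - \<beta> *\<^sub>R outer a)
                        (- (\<alpha> *\<^sub>R outer a)) (mat 1 - \<alpha> *\<^sub>R outer a)"

definition Amat :: "((real^'d) \<times> real) measure \<Rightarrow> real \<Rightarrow> real \<Rightarrow> real^('d+'d)^('d+'d)" where
  "Amat \<rho> \<alpha> \<beta> = blockm (mat 1 - \<beta> *\<^sub>R Hmat \<rho>) (mat 1 - \<beta> *\<^sub>R Hmat \<rho>)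
                        (- (\<alpha> *\<^sub>R Hmat \<rho>)) (mat 1 - \<alpha> *\<^sub>R Hmat \<rho>)"

definition Top :: "((real^'d) \<times> real) measure \<Rightarrow> real \<Rightarrow> real \<Rightarrow>
    real^('d+'d)^('d+'d) \<Rightarrow> real^('d+'d)^('d+'d)" where
  "Top \<rho> \<alpha> \<beta> \<Theta> = integral\<^sup>L \<rho> (\<lambda>z. Jmat \<alpha> \<beta> (fst z) ** \<Theta> ** transpose (Jmat \<alpha> \<beta> (fst z)))"

definition Ttil :: "((real^'d) \<times> real) measure \<Rightarrow> real \<Rightarrow> real \<Rightarrow>
    real^('d+'d)^('d+'d) \<Rightarrow> real^('d+'d)^('d+'d)" where
  "Ttil \<rho> \<alpha> \<beta> \<Theta> = Amat \<rho> \<alpha> \<beta> ** \<Theta> ** transpose (Amat \<rho> \<alpha> \<beta>)"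

definition TtilT :: "((real^'d) \<times> real) measure \<Rightarrow> real \<Rightarrow> real \<Rightarrow>
    real^('d+'d)^('d+'d) \<Rightarrow> real^('d+'d)^('d+'d)" where
  "TtilT \<rho> \<alpha> \<beta> \<Theta> = transpose (Amat \<rho> \<alpha> \<beta>) ** \<Theta> ** Amat \<rho> \<alpha> \<beta>"

definition Mop :: "((real^'d) \<times> real) measure \<Rightarrow> real \<Rightarrow> real \<Rightarrow>
    real^('d+'d)^('d+'d) \<Rightarrow> real^('d+'d)^('d+'d)" where
  "Mop \<rho> \<alpha> \<beta> \<Theta> = integral\<^sup>L \<rho> (\<lambda>z.
      (Jmat \<alpha> \<beta> (fst z) - Amat \<rho> \<alpha> \<beta>) ** \<Theta> ** transpose (Jmat \<alpha> \<beta> (fst z) - Amat \<rho> \<alpha> \<beta>))"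

definition MopT :: "((real^'d) \<times> real) measure \<Rightarrow> real \<Rightarrow> real \<Rightarrow>
    real^('d+'d)^('d+'d) \<Rightarrow> real^('d+'d)^('d+'d)" where
  "MopT \<rho> \<alpha> \<beta> \<Theta> = integral\<^sup>L \<rho> (\<lambda>z.
      transpose (Jmat \<alpha> \<beta> (fst z) - Amat \<rho> \<alpha> \<beta>) ** \<Theta> ** (Jmat \<alpha> \<beta> (fst z) - Amat \<rho> \<alpha> \<beta>))"

definition Upsilon :: "((real^'d) \<times> real) measure \<Rightarrow> real^('d+'d)^('d+'d)" where
  "Upsilon \<rho> = blockm (Hmat \<rho>) (Hmat \<rho>) (Hmat \<rho>) (Hmat \<rho>)"

definition Nmat :: "((real^'d) \<times> real) measure \<Rightarrow> real \<Rightarrow> real \<Rightarrow> real^('d+'d)^('d+'d)" where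
  "Nmat \<rho> \<alpha> \<beta> = blockm ((\<beta>^2) *\<^sub>R Hmat \<rho>) ((\<alpha>*\<beta>) *\<^sub>R Hmat \<rho>)
                          ((\<alpha>*\<beta>) *\<^sub>R Hmat \<rho>) ((\<alpha>^2) *\<^sub>R Hmat \<rho>)"

text \<open>(I - S)^{-1} exists (as Neumann series) and its value on \<Theta>.\<close>
definition inv_exists :: "(('a::real_normed_vector) \<Rightarrow> 'a) \<Rightarrow> bool" where
  "inv_exists S \<longleftrightarrow> (\<forall>\<Theta>. summable (\<lambda>t. (S ^^ t) \<Theta>))"

definition inv_on_exists :: "(('a::real_normed_vector) \<Rightarrow> 'a) \<Rightarrow> 'a \<Rightarrow> bool" where
  "inv_on_exists S \<Theta> \<longleftrightarrow> summable (\<lambda>t. (S ^^ t) \<Theta>)"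

definition inv_apply :: "(('a::real_normed_vector) \<Rightarrow> 'a) \<Rightarrow> 'a \<Rightarrow> 'a" where
  "inv_apply S \<Theta> = (\<Sum>t. (S ^^ t) \<Theta>)"

end

theory Submission
  imports Defs
begin

definition pv :: "real^'d \<Rightarrow> real^'d \<Rightarrow> real^('d+'d)" where
  "pv x y = (\<chi> i. case i of Inl j \<Rightarrow> x$j | Inr j \<Rightarrow> y$j)"
definition v1 :: "real^('d+'d) \<Rightarrow> real^'d" where "v1 v = (\<chi> j. v $ Inl j)"
definition v2 :: "real^('d+'d) \<Rightarrow> real^'d" where "v2 v = (\<chi> j. v $ Inr j)"

lemma pv_split: "v = pv (v1 v) (v2 v)"
  by (simp add: pv_def v1_def v2_def vec_eq_iff split: sum.split)

lemma sum_UNIV_plus: "(\<Sum>i\<in>(UNIV::('a::finite+'a) set). f i) = (\<Sum>j\<in>UNIV. f (Inl j)) + (\<Sum>j\<in>UNIV. f (Inr j))"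
  by (simp add: UNIV_Plus_UNIV[symmetric] sum.Plus comp_def del: UNIV_Plus_UNIV)

lemma inner_pv: "pv x y \<bullet> pv x' y' = x \<bullet> x' + y \<bullet> y'"
  by (simp add: inner_vec_def sum_UNIV_plus pv_def)

lemma blockm_mv: "blockm P Q R S *v pv x y = pv (P *v x + Q *v y) (R *v x + S *v y)"
  by (simp add: vec_eq_iff matrix_vector_mult_def blockm_def pv_def sum_UNIV_plus sum.distrib split: sum.split)

lemma transpose_blockm: "transpose (blockm P Q R S) = blockm (transpose P) (transpose R) (transpose Q) (transpose S)"
  by (simp add: vec_eq_iff transpose_def blockm_def split: sum.split)

lemma blockm_diff: "blockm P Q R S - blockm P' Q' R' S' = blockm (P-P') (Q-Q') (R-R') (S-S')"
  by (simp add: vec_eq_iff blockm_def split: sum.split)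

lemma pv_add: "pv x y + pv x' y' = pv (x+x') (y+y')"
  by (simp add: vec_eq_iff pv_def split: sum.split)
lemma pv_scale: "c *\<^sub>R pv x y = pv (c *\<^sub>R x) (c *\<^sub>R y)"
  by (simp add: vec_eq_iff pv_def split: sum.split)
lemma pv_eq: "pv x y = pv x' y' \<longleftrightarrow> x = x' \<and> y = y'"
  apply (simp add: vec_eq_iff pv_def split: sum.split) by (metis sum.case)
lemma pv_zero: "pv 0 0 = 0"
  by (simp add: vec_eq_iff pv_def split: sum.split)
lemma norm_pv: "(norm (pv x y))^2 = (norm x)^2 + (norm y)^2"
  by (simp add: power2_norm_eq_inner inner_pv)


locale hk =
  fixes H K :: "real^'d^'d" and \<alpha> \<beta> R2 :: real
  assumes HS: "\<And>x y. (H *v x) \<bullet> y = x \<bullet> (H *v y)"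
    and KS: "\<And>x y. (K *v x) \<bullet> y = x \<bullet> (K *v y)"
    and KH: "\<And>x. K *v (H *v x) = x"
    and HK: "\<And>x. H *v (K *v x) = x"
    and Hpsd: "\<And>x. 0 \<le> x \<bullet> (H *v x)"
    and F6: "\<And>x. (H *v x) \<bullet> (H *v x) \<le> R2 * (x \<bullet> (H *v x))"
    and R2pos: "R2 > 0"
    and apos: "\<alpha> > 0" and bpos: "\<beta> > 0"
    and step: "(\<alpha> + 2*\<beta>) * R2 \<le> 1"
begin

definition "\<gamma> = \<beta> + \<alpha>/2"
definition Dv where "Dv p = p - \<beta> *\<^sub>R (H *v p)"
definition Tv where "Tv q = 2 *\<^sub>R q - (\<alpha>+\<beta>) *\<^sub>R (H *v q)"
definition Vf where "Vf p q = p \<bullet> (H *v p) + (1/(3*\<alpha>*\<beta>)) *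
   (2 * ((Dv p - q) \<bullet> (K *v (Dv p - q))) - \<gamma> * ((Dv p - q) \<bullet> (Dv p - q))
    + (\<alpha>/2) * ((Dv p + q) \<bullet> (Dv p + q)))"

lemma HS1: "x \<bullet> (H *v y) = y \<bullet> (H *v x)"
  by (metis HS inner_commute)
lemma KS1: "x \<bullet> (K *v y) = y \<bullet> (K *v x)"
  by (metis KS inner_commute)
lemma HS2: "x \<bullet> (H *v (H *v y)) = y \<bullet> (H *v (H *v x))"
  by (metis HS inner_commute)
lemma HS3: "x \<bullet> (H *v (H *v (H *v y))) = y \<bullet> (H *v (H *v (H *v x)))"
  by (metis HS inner_commute)

lemmas normal = HS KS KH HK HS1 KS1 HS2 HS3 inner_add_left inner_add_right inner_diff_left inner_diff_right
  inner_scaleR_left inner_scaleR_right matrix_vector_right_distrib matrix_vector_mult_diff_distrib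
  matrix_vector_mult_scaleR

lemma I1: "Vf p q - Vf q (Tv q - Dv p) = p \<bullet> (H *v p) + (1/3) * (q \<bullet> (H *v q) - 2*\<gamma>*((H *v q) \<bullet> (H *v q)))"
  using apos bpos
  unfolding Vf_def Dv_def Tv_def \<gamma>_def
  apply (simp add: normal)
  apply (simp add: field_simps)
  by (simp add: inner_commute)


lemma I2: "(2/3) * (\<gamma> * (z \<bullet> z) + (\<alpha>/\<beta>) * (z \<bullet> (K *v z))) - Vf ((\<alpha>+\<beta>) *\<^sub>R z) ((2*\<alpha>+\<beta>) *\<^sub>R z - (\<alpha>+\<beta>)^2 *\<^sub>R (H *v z))
   = ((\<alpha>+\<beta>)^2/3) * (z \<bullet> (H *v z) - 2*\<gamma>*((H *v z) \<bullet> (H *v z)))"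
  using apos bpos
  unfolding Vf_def Dv_def Tv_def \<gamma>_def
  apply (simp add: normal power2_eq_square)
  apply (simp add: field_simps)
  done

lemma gam_R2: "2 * \<gamma> * R2 \<le> 1"
  using step unfolding \<gamma>_def by (simp add: algebra_simps)

lemma G_nonneg: "0 \<le> q \<bullet> (H *v q) - 2*\<gamma>*((H *v q) \<bullet> (H *v q))"
proof -
  have g: "\<gamma> > 0" using apos bpos unfolding \<gamma>_def by simp
  have "2*\<gamma>*((H *v q) \<bullet> (H *v q)) \<le> 2*\<gamma>*(R2 * (q \<bullet> (H *v q)))"
    using F6[of q] g by simp
  also have "\<dots> \<le> q \<bullet> (H *v q)"
    using gam_R2 Hpsd[of q] mult_right_mono[OF gam_R2 Hpsd[of q]] by (simp add: algebra_simps)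
  finally show ?thesis by simp
qed

lemma K_lower: "w \<bullet> w \<le> R2 * (w \<bullet> (K *v w))"
proof -
  define y where "y = K *v w"
  have w: "w = H *v y" using HK y_def by simp
  have "w \<bullet> (K *v w) = y \<bullet> (H *v y)" using w y_def HS inner_commute by metis
  then show ?thesis using F6[of y] w by simp
qed

lemma K_psd: "0 \<le> 2 * (w \<bullet> (K *v w)) - \<gamma> * (w \<bullet> w)"
proof -
  have g: "\<gamma> > 0" using apos bpos unfolding \<gamma>_def by simp
  have "\<gamma> * (w \<bullet> w) \<le> \<gamma> * (R2 * (w \<bullet> (K *v w)))"
    using K_lower[of w] g by simp
  also have "\<dots> = (\<gamma> * R2) * (w \<bullet> (K *v w))" by simp
  also have "\<dots> \<le> 2 * (w \<bullet> (K *v w))"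
  proof -
    have "0 \<le> w \<bullet> (K *v w)" using K_lower[of w] R2pos
      by (meson inner_ge_zero order_trans zero_le_mult_iff not_le less_le)
    moreover have "\<gamma> * R2 \<le> 2" using gam_R2 g R2pos by simp
    ultimately show ?thesis by (simp add: mult_right_mono)
  qed
  finally show ?thesis by simp
qed

lemma V_nonneg: "0 \<le> Vf p q"
proof -
  have "0 \<le> 2 * ((Dv p - q) \<bullet> (K *v (Dv p - q))) - \<gamma> * ((Dv p - q) \<bullet> (Dv p - q))
    + (\<alpha>/2) * ((Dv p + q) \<bullet> (Dv p + q))"
    using K_psd[of "Dv p - q"] apos by simp
  then show ?thesis unfolding Vf_def using Hpsd[of p] apos bpos by simp
qed

lemma telescope:
  assumes rec: "\<And>t. r (Suc (Suc t)) = Tv (r (Suc t)) - Dv (r t)"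
  shows "(\<Sum>t<n. r t \<bullet> (H *v r t)) \<le> Vf (r 0) (r 1) - Vf (r n) (r (Suc n))"
proof (induction n)
  case 0 then show ?case by simp
next
  case (Suc n)
  have "Vf (r n) (r (Suc n)) - Vf (r (Suc n)) (r (Suc (Suc n))) \<ge> r n \<bullet> (H *v r n)"
    using I1[of "r n" "r (Suc n)"] rec[of n] G_nonneg[of "r (Suc n)"] by simp
  then show ?case using Suc by simp
qed

lemma sum_bound:
  assumes rec: "\<And>t. r (Suc (Suc t)) = Tv (r (Suc t)) - Dv (r t)"
  shows "(\<Sum>t<n. r t \<bullet> (H *v r t)) \<le> Vf (r 0) (r 1)"
  using telescope[of r n] rec V_nonneg[of "r n" "r (Suc n)"] by simp

end

lemma scaleR_mv: "(c *\<^sub>R A) *v x = c *\<^sub>R (A *v (x::real^'n))"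
  by (simp add: vec_eq_iff matrix_vector_mult_def sum_distrib_left algebra_simps)
lemma uminus_mv: "(- A) *v x = - (A *v (x::real^'n))"
  by (simp add: vec_eq_iff matrix_vector_mult_def sum_negf)

lemma transpose_diff': "transpose (A - B) = transpose A - transpose (B::real^'n^'m)"
  by (simp add: vec_eq_iff transpose_def)
lemma transpose_uminus': "transpose (- A) = - transpose (A::real^'n^'m)"
  by (simp add: vec_eq_iff transpose_def)

definition Ablk :: "real^'d^'d \<Rightarrow> real \<Rightarrow> real \<Rightarrow> real^('d+'d)^('d+'d)" where
  "Ablk H \<alpha> \<beta> = blockm (mat 1 - \<beta> *\<^sub>R H) (mat 1 - \<beta> *\<^sub>R H) (- (\<alpha> *\<^sub>R H)) (mat 1 - \<alpha> *\<^sub>R H)"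

lemma Amat_Ablk: "Amat \<rho> \<alpha> \<beta> = Ablk (Hmat \<rho>) \<alpha> \<beta>"
  by (simp add: Amat_def Ablk_def)

lemma Ablk_mv: "Ablk H \<alpha> \<beta> *v pv f g =
   pv ((f - \<beta> *\<^sub>R (H *v f)) + (g - \<beta> *\<^sub>R (H *v g))) (g - \<alpha> *\<^sub>R (H *v f) - \<alpha> *\<^sub>R (H *v g))"
  by (simp add: Ablk_def blockm_mv matrix_vector_mult_diff_rdistrib scaleR_mv uminus_mv algebra_simps)

lemma AblkT_mv:
  assumes "transpose H = H"
  shows "transpose (Ablk H \<alpha> \<beta>) *v pv f g =
   pv ((f - \<beta> *\<^sub>R (H *v f)) - \<alpha> *\<^sub>R (H *v g)) ((f - \<beta> *\<^sub>R (H *v f)) + (g - \<alpha> *\<^sub>R (H *v g)))"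
  using assms
  by (simp add: Ablk_def transpose_blockm blockm_mv matrix_vector_mult_diff_rdistrib scaleR_mv uminus_mv
     transpose_scalar transpose_diff' transpose_uminus' algebra_simps)

context hk begin

lemma A_rec:
  "v1 (Ablk H \<alpha> \<beta> *v (Ablk H \<alpha> \<beta> *v y)) = Tv (v1 (Ablk H \<alpha> \<beta> *v y)) - Dv (v1 y)"
  "v2 (Ablk H \<alpha> \<beta> *v (Ablk H \<alpha> \<beta> *v y)) = Tv (v2 (Ablk H \<alpha> \<beta> *v y)) - Dv (v2 y)"
proof -
  obtain f g where y: "y = pv f g" using pv_split by blast
  have v1: "v1 (pv f g) = f" "v2 (pv f g) = g" for f g :: "real^'d"
    by (simp_all add: v1_def v2_def pv_def)
  show "v1 (Ablk H \<alpha> \<beta> *v (Ablk H \<alpha> \<beta> *v y)) = Tv (v1 (Ablk H \<alpha> \<beta> *v y)) - Dv (v1 y)"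
    "v2 (Ablk H \<alpha> \<beta> *v (Ablk H \<alpha> \<beta> *v y)) = Tv (v2 (Ablk H \<alpha> \<beta> *v y)) - Dv (v2 y)"
    unfolding y Ablk_mv v1 Tv_def Dv_def
    by (simp_all add: algebra_simps vec_eq_iff)
qed

lemma AT_rec:
  assumes "transpose H = H"
  shows
  "v1 (transpose (Ablk H \<alpha> \<beta>) *v (transpose (Ablk H \<alpha> \<beta>) *v y)) = Tv (v1 (transpose (Ablk H \<alpha> \<beta>) *v y)) - Dv (v1 y)"
  "v2 (transpose (Ablk H \<alpha> \<beta>) *v (transpose (Ablk H \<alpha> \<beta>) *v y)) = Tv (v2 (transpose (Ablk H \<alpha> \<beta>) *v y)) - Dv (v2 y)"
proof -
  obtain f g where y: "y = pv f g" using pv_split by blast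
  have v1: "v1 (pv f g) = f" "v2 (pv f g) = g" for f g :: "real^'d"
    by (simp_all add: v1_def v2_def pv_def)
  show "v1 (transpose (Ablk H \<alpha> \<beta>) *v (transpose (Ablk H \<alpha> \<beta>) *v y)) = Tv (v1 (transpose (Ablk H \<alpha> \<beta>) *v y)) - Dv (v1 y)"
  "v2 (transpose (Ablk H \<alpha> \<beta>) *v (transpose (Ablk H \<alpha> \<beta>) *v y)) = Tv (v2 (transpose (Ablk H \<alpha> \<beta>) *v y)) - Dv (v2 y)"
    unfolding y AblkT_mv[OF assms] v1 Tv_def Dv_def
    by (simp_all add: algebra_simps vec_eq_iff)
qed

end

lemma summable_matrix:
  fixes P :: "nat \<Rightarrow> real^'n^'m"
  assumes "\<And>i j. summable (\<lambda>t. P t $ i $ j)"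
  shows "summable P"
proof -
  define s :: "real^'n^'m" where "s = (\<chi> i j. suminf (\<lambda>t. P t $ i $ j))"
  have "(\<lambda>n. \<Sum>t<n. P t) \<longlonglongrightarrow> s"
  proof (rule vec_tendstoI)
    fix i show "(\<lambda>n. (\<Sum>t<n. P t) $ i) \<longlonglongrightarrow> s $ i"
    proof (rule vec_tendstoI)
      fix j show "(\<lambda>n. (\<Sum>t<n. P t) $ i $ j) \<longlonglongrightarrow> s $ i $ j"
        using summable_LIMSEQ[OF assms[of i j]] by (simp add: s_def)
    qed
  qed
  then show ?thesis unfolding summable_def sums_def by blast
qed

lemma entry_inner: "axis i 1 \<bullet> ((M::real^'n^'n) *v axis j 1) = M $ i $ j"
proof -
  have "(M *v axis j 1) $ i = M $ i $ j"
    by (simp add: matrix_vector_mult_def axis_def if_distrib cong: if_cong)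
  then show ?thesis by (simp add: inner_axis')
qed

lemma summable_psd:
  fixes P :: "nat \<Rightarrow> real^'n^'n"
  assumes sym: "\<And>t i j. P t $ i $ j = P t $ j $ i"
    and psd: "\<And>t x. 0 \<le> x \<bullet> (P t *v x)"
    and bnd: "\<And>x. \<exists>B. \<forall>n. (\<Sum>t<n. x \<bullet> (P t *v x)) \<le> B"
  shows "summable P"
proof (rule summable_matrix)
  have diag: "summable (\<lambda>t. P t $ i $ i)" for i
  proof -
    obtain B where B: "\<And>n. (\<Sum>t<n. axis i 1 \<bullet> (P t *v axis i 1)) \<le> B" using bnd by blast
    show ?thesis
    proof (rule bounded_imp_summable)
      show "0 \<le> P n $ i $ i" for n using psd[where t=n and x="axis i 1"] by (simp add: entry_inner)
      show "(\<Sum>k\<le>n. P k $ i $ i) \<le> B" for n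
        using B[of "Suc n"] by (simp add: entry_inner lessThan_Suc_atMost)
    qed
  qed
  fix i j
  have bound: "norm (P t $ i $ j) \<le> (P t $ i $ i + P t $ j $ j)/2" for t
  proof -
    let ?a = "axis i (1::real)" and ?b = "axis j (1::real)"
    have e: "(x + s *\<^sub>R y) \<bullet> (P t *v (x + s *\<^sub>R y)) = x \<bullet> (P t *v x) + s * (x \<bullet> (P t *v y))
      + s * (y \<bullet> (P t *v x)) + s * s * (y \<bullet> (P t *v y))" for x y s
      by (simp add: matrix_vector_right_distrib matrix_vector_mult_scaleR inner_add_left inner_add_right algebra_simps)
    have p1: "0 \<le> P t $ i $ i + P t $ i $ j + P t $ j $ i + P t $ j $ j"
      using psd[where t=t and x="?a + 1 *\<^sub>R ?b"] unfolding e by (simp add: entry_inner)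
    have p2: "0 \<le> P t $ i $ i - P t $ i $ j - P t $ j $ i + P t $ j $ j"
      using psd[where t=t and x="?a + (-1) *\<^sub>R ?b"] unfolding e by (simp add: entry_inner)
    show ?thesis using p1 p2 sym[where t=t and i=j and j=i] by (simp add: abs_le_iff)
  qed
  show "summable (\<lambda>t. P t $ i $ j)"
    apply (rule summable_comparison_test[OF _ summable_divide[OF summable_add[OF diag diag]]])
    using bound by blast
qed


lemma semi_CS:
  fixes H :: "real^'d^'d"
  assumes HS: "\<And>x y. (H *v x) \<bullet> y = x \<bullet> (H *v y)"
    and psd: "\<And>x. 0 \<le> x \<bullet> (H *v x)"
  shows "(x \<bullet> (H *v y))^2 \<le> (x \<bullet> (H *v x)) * (y \<bullet> (H *v y))"
proof -
  define X where "X = x \<bullet> (H *v x)"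
  define Y where "Y = y \<bullet> (H *v y)"
  define Z where "Z = x \<bullet> (H *v y)"
  have q: "0 \<le> X + 2*t*Z + t*t*Y" for t
  proof -
    have "(x + t *\<^sub>R y) \<bullet> (H *v (x + t *\<^sub>R y)) = X + t * (x \<bullet> (H *v y)) + t * (y \<bullet> (H *v x)) + t*t*Y"
      unfolding X_def Y_def
      by (simp add: matrix_vector_right_distrib matrix_vector_mult_scaleR inner_add_left inner_add_right algebra_simps)
    moreover have "y \<bullet> (H *v x) = Z" unfolding Z_def using HS by (metis inner_commute)
    ultimately show ?thesis using psd[of "x + t *\<^sub>R y"] unfolding Z_def by simp
  qed
  have X0: "0 \<le> X" "0 \<le> Y" using psd unfolding X_def Y_def by auto
  show ?thesis
  proof (cases "Y > 0")
    case True
    have "0 \<le> X + 2*(-Z/Y)*Z + (-Z/Y)*(-Z/Y)*Y" by (rule q)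
    also have "\<dots> = X - Z^2/Y" using True by (simp add: field_simps power2_eq_square)
    finally have "Z^2/Y \<le> X" by simp
    then have "Z^2 \<le> X * Y" using True by (simp add: field_simps)
    then show ?thesis unfolding X_def Y_def Z_def .
  next
    case False
    then have Y: "Y = 0" using X0 by simp
    have "Z = 0"
    proof (rule ccontr)
      assume "Z \<noteq> 0"
      have "0 \<le> X + 2*(-(X+1)/(2*Z))*Z + 0" using q[of "-(X+1)/(2*Z)"] Y by simp
      also have "\<dots> = -1" using \<open>Z \<noteq> 0\<close> by (simp add: field_simps)
      finally show False by simp
    qed
    then show ?thesis using X0 Y unfolding X_def Y_def Z_def by simp
  qed
qed

lemma mv_inner_transpose: "(A *v x) \<bullet> y = x \<bullet> (transpose A *v (y::real^'n))"
  by (metis dot_lmul_matrix inner_commute transpose_matrix_vector)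

lemma outer_mv: "outer a *v y = (a \<bullet> y) *\<^sub>R a"
  by (simp add: vec_eq_iff outer_def matrix_vector_mult_def inner_vec_def sum_distrib_left algebra_simps)

lemma outer_qf: "x \<bullet> (outer a *v y) = (a \<bullet> x) * (a \<bullet> y)"
  by (simp add: outer_mv inner_commute)

lemma transpose_outer: "transpose (outer a) = outer a"
  by (simp add: vec_eq_iff outer_def transpose_def)

lemma bl_qf: "bounded_linear (\<lambda>M::real^'n^'m. x \<bullet> (M *v y))"
proof -
  have "linear (\<lambda>M::real^'n^'m. x \<bullet> (M *v y))"
    by (rule linearI) (simp_all add: matrix_vector_mult_add_rdistrib inner_add_right
        matrix_vector_mult_def inner_vec_def sum_distrib_left sum.distrib algebra_simps)
  then show ?thesis using linear_conv_bounded_linear by blast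
qed

lemma not_inv0: "\<not> invertible (0::real^'d^'d)"
proof
  assume "invertible (0::real^'d^'d)"
  then obtain B :: "real^'d^'d" where "0 ** B = mat 1" unfolding invertible_def by blast
  then have "(mat 1 :: real^'d^'d) = 0" by simp
  then have "(mat 1 :: real^'d^'d) $ undefined $ undefined = 0" by simp
  then show False by (simp add: mat_def)
qed

locale setting = prob_space \<rho> for \<rho> :: "((real^'d) \<times> real) measure" +
  fixes R \<kappa> \<alpha> \<beta> :: real
  assumes sets_eq: "sets \<rho> = sets borel"
    and int_norm2: "integrable \<rho> (\<lambda>z. (norm (fst z))^2)"
    and Hinv: "invertible (Hmat \<rho>)"
    and int7: "integrable \<rho> (\<lambda>z. (norm (fst z))^2 *\<^sub>R outer (fst z))"
    and le7: "loewner_le (integral\<^sup>L \<rho> (\<lambda>z. (norm (fst z))^2 *\<^sub>R outer (fst z))) (R^2 *\<^sub>R Hmat \<rho>)"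
    and int9: "integrable \<rho> (\<lambda>z. (fst z \<bullet> (matrix_inv (Hmat \<rho>) *v fst z)) *\<^sub>R outer (fst z))"
    and le9: "loewner_le (integral\<^sup>L \<rho> (\<lambda>z. (fst z \<bullet> (matrix_inv (Hmat \<rho>) *v fst z)) *\<^sub>R outer (fst z)))
           (\<kappa> *\<^sub>R Hmat \<rho>)"
    and apos: "\<alpha> > 0" and bpos: "\<beta> > 0"
    and step: "(\<alpha> + 2*\<beta>) * R^2 \<le> 1"
    and acond: "\<alpha> \<le> \<beta> / (2*\<kappa>)"
begin

abbreviation "H \<equiv> Hmat \<rho>"
abbreviation "K \<equiv> matrix_inv (Hmat \<rho>)"

lemma meas: "continuous_on UNIV f \<Longrightarrow> f \<in> borel_measurable \<rho>"
  using measurable_cong_sets[OF sets_eq refl] borel_measurable_continuous_onI by blast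

lemma int_outer: "integrable \<rho> (\<lambda>z. outer (fst z))"
  using Hinv not_inv0 not_integrable_integral_eq unfolding Hmat_def by metis

lemma H_bil: "x \<bullet> (H *v y) = (\<integral>z. (fst z \<bullet> x) * (fst z \<bullet> y) \<partial>\<rho>)"
  unfolding Hmat_def
  using integral_bounded_linear[OF bl_qf[of x y] int_outer]
  by (simp add: outer_mv inner_commute mult.commute)

lemma int_bil: "integrable \<rho> (\<lambda>z. (fst z \<bullet> x) * (fst z \<bullet> y))"
  using integrable_bounded_linear[OF bl_qf[of x y] int_outer]
  by (simp add: outer_mv inner_commute mult.commute)

lemma HS: "(H *v x) \<bullet> y = x \<bullet> (H *v y)"
  by (simp add: H_bil inner_commute mult.commute)

lemma Hpsd: "0 \<le> x \<bullet> (H *v x)"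
  by (simp add: H_bil)

lemma HT: "transpose H = H"
proof -
  have "transpose H $ i $ j = H $ i $ j" for i j
    using HS[of "axis j 1" "axis i 1"] by (simp add: entry_inner[symmetric] inner_commute transpose_def)
  then show ?thesis by (simp add: vec_eq_iff)
qed

lemma E7_qf: "x \<bullet> (integral\<^sup>L \<rho> (\<lambda>z. (norm (fst z))^2 *\<^sub>R outer (fst z)) *v x) = (\<integral>z. (norm (fst z))^2 * (fst z \<bullet> x)^2 \<partial>\<rho>)"
  using integral_bounded_linear[OF bl_qf[of x x] int7]
  by (simp only: outer_qf scaleR_mv inner_scaleR_right power2_eq_square)

lemma int7x: "integrable \<rho> (\<lambda>z. (norm (fst z))^2 * (fst z \<bullet> x)^2)"
  using integrable_bounded_linear[OF bl_qf[of x x] int7]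
  by (simp only: outer_qf scaleR_mv inner_scaleR_right power2_eq_square)

lemma E7_le: "(\<integral>z. (norm (fst z))^2 * (fst z \<bullet> x)^2 \<partial>\<rho>) \<le> R^2 * (x \<bullet> (H *v x))"
proof -
  have "x \<bullet> (integral\<^sup>L \<rho> (\<lambda>z. (norm (fst z))^2 *\<^sub>R outer (fst z)) *v x) \<le> x \<bullet> ((R^2 *\<^sub>R H) *v x)"
    using le7 unfolding loewner_le_def by blast
  then show ?thesis unfolding E7_qf scaleR_mv inner_scaleR_right .
qed

end

context setting begin

lemma int_sq: "integrable \<rho> (\<lambda>z. (fst z \<bullet> x)^2)"
  using int_bil[of x x] by (simp add: power2_eq_square)

lemma F3: "x \<bullet> (H *v x) \<le> R^2 * (x \<bullet> x)"
proof -
  define X where "X z = (fst (z::(real^'d)\<times>real) \<bullet> x)^2" for z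
  have iX: "integrable \<rho> X" unfolding X_def by (rule int_sq)
  have majint: "integrable \<rho> (\<lambda>z. (x \<bullet> x) * ((norm (fst z))^2 * (fst z \<bullet> x)^2))"
    using int7x[of x] by simp
  have bnd: "(X z)^2 \<le> (x \<bullet> x) * ((norm (fst z))^2 * (fst z \<bullet> x)^2)" for z
  proof -
    have cs: "(fst z \<bullet> x)^2 \<le> (norm (fst z))^2 * (x \<bullet> x)"
      using Cauchy_Schwarz_ineq[of "fst z" x] by (simp add: power2_norm_eq_inner)
    have "(X z)^2 = (fst z \<bullet> x)^2 * (fst z \<bullet> x)^2" unfolding X_def by (simp add: power2_eq_square)
    also have "\<dots> \<le> ((norm (fst z))^2 * (x \<bullet> x)) * (fst z \<bullet> x)^2"
      by (rule mult_right_mono[OF cs]) simp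
    finally show ?thesis by (simp add: algebra_simps)
  qed
  have iX2: "integrable \<rho> (\<lambda>z. (X z)^2)"
  proof (rule Bochner_Integration.integrable_bound[OF majint])
    show "(\<lambda>z. (X z)^2) \<in> borel_measurable \<rho>"
      unfolding X_def by (intro meas continuous_intros)
    show "AE z in \<rho>. norm ((X z)^2) \<le> norm ((x \<bullet> x) * ((norm (fst z))^2 * (fst z \<bullet> x)^2))"
      using bnd by (intro AE_I2) (simp add: abs_of_nonneg)
  qed
  have "0 \<le> variance X" by (rule variance_positive)
  then have v: "(expectation X)^2 \<le> expectation (\<lambda>z. (X z)^2)"
    using variance_eq[OF iX iX2] by simp
  have EX: "expectation X = x \<bullet> (H *v x)" unfolding X_def H_bil by (simp add: power2_eq_square)
  have "expectation (\<lambda>z. (X z)^2) \<le> expectation (\<lambda>z. (x \<bullet> x) * ((norm (fst z))^2 * (fst z \<bullet> x)^2))"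
    by (rule integral_mono[OF iX2 majint bnd])
  also have "\<dots> = (x \<bullet> x) * expectation (\<lambda>z. (norm (fst z))^2 * (fst z \<bullet> x)^2)" by simp
  also have "\<dots> \<le> (x \<bullet> x) * (R^2 * (x \<bullet> (H *v x)))"
    by (rule mult_left_mono[OF E7_le]) simp
  finally have main: "(x \<bullet> (H *v x))^2 \<le> (x \<bullet> x) * (R^2 * (x \<bullet> (H *v x)))" using v EX by simp
  show ?thesis
  proof (cases "x \<bullet> (H *v x) > 0")
    case True
    then show ?thesis using main by (simp add: power2_eq_square algebra_simps)
  next
    case False
    then show ?thesis by (meson inner_ge_zero mult_nonneg_nonneg not_le order_trans zero_le_power2)
  qed
qed

lemma F6: "(H *v x) \<bullet> (H *v x) \<le> R^2 * (x \<bullet> (H *v x))"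
proof -
  define n where "n = (H *v x) \<bullet> (H *v x)"
  have n0: "0 \<le> n" unfolding n_def by simp
  have "(x \<bullet> (H *v (H *v x)))^2 \<le> (x \<bullet> (H *v x)) * ((H *v x) \<bullet> (H *v (H *v x)))"
    by (rule semi_CS[OF HS Hpsd])
  moreover have "x \<bullet> (H *v (H *v x)) = n" unfolding n_def by (simp add: HS)
  moreover have "(H *v x) \<bullet> (H *v (H *v x)) \<le> R^2 * n" unfolding n_def by (rule F3)
  ultimately have "n^2 \<le> (x \<bullet> (H *v x)) * (R^2 * n)"
    by (metis Hpsd mult_left_mono order_trans)
  then show ?thesis
    by (cases "n > 0") (auto simp: power2_eq_square n_def algebra_simps intro: mult_nonneg_nonneg Hpsd)
qed

lemma HK_mat: "H ** K = mat 1" "K ** H = mat 1"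
proof -
  have "\<exists>A'. H ** A' = mat 1 \<and> A' ** H = mat 1" using Hinv unfolding invertible_def by blast
  then have "H ** K = mat 1 \<and> K ** H = mat 1" unfolding matrix_inv_def by (rule someI_ex)
  then show "H ** K = mat 1" "K ** H = mat 1" by auto
qed

lemma KH: "K *v (H *v x) = x" by (simp add: matrix_vector_mul_assoc HK_mat)
lemma HK: "H *v (K *v x) = x" by (simp add: matrix_vector_mul_assoc HK_mat)

lemma KT: "transpose K = K"
proof -
  have "transpose K ** H = mat 1"
    using HK_mat(1) HT by (metis matrix_transpose_mul transpose_mat)
  then have "transpose K = transpose K ** (H ** K)" using HK_mat by simp
  also have "\<dots> = K" by (simp add: matrix_mul_assoc \<open>transpose K ** H = mat 1\<close>)
  finally show ?thesis .
qed

lemma KS: "(K *v x) \<bullet> y = x \<bullet> (K *v y)"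
  using mv_inner_transpose[of K x y] KT by simp

lemma mu_bound: "\<exists>B>0. \<forall>x. x \<bullet> x \<le> B * (x \<bullet> (H *v x))"
proof -
  have "bounded_linear (\<lambda>x. K *v x)"
    using linear_conv_bounded_linear matrix_vector_mul_linear by blast
  then obtain B where B: "B > 0" "\<And>x. norm (K *v x) \<le> norm x * B"
    using bounded_linear.pos_bounded by blast
  have "x \<bullet> x \<le> B * (x \<bullet> (H *v x))" for x
  proof -
    have "(x \<bullet> (H *v (K *v x)))^2 \<le> (x \<bullet> (H *v x)) * ((K *v x) \<bullet> (H *v (K *v x)))"
      by (rule semi_CS[OF HS Hpsd])
    then have a: "(x \<bullet> x)^2 \<le> (x \<bullet> (H *v x)) * ((K *v x) \<bullet> x)" by (simp add: HK)
    have "(K *v x) \<bullet> x \<le> norm (K *v x) * norm x" by (rule norm_cauchy_schwarz)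
    also have "\<dots> \<le> (norm x * B) * norm x" using B(2)[of x] by (simp add: mult_right_mono)
    finally have b: "(K *v x) \<bullet> x \<le> B * (x \<bullet> x)" by (simp add: power2_norm_eq_inner[symmetric] power2_eq_square algebra_simps)
    have "(x \<bullet> x)^2 \<le> (x \<bullet> (H *v x)) * (B * (x \<bullet> x))"
      using a mult_left_mono[OF b Hpsd[of x]] by linarith
    then show ?thesis
      by (cases "x \<bullet> x > 0") (auto simp: power2_eq_square algebra_simps intro: mult_nonneg_nonneg Hpsd less_imp_le[OF B(1)])
  qed
  then show ?thesis using B(1) by blast
qed

lemma R2pos: "R^2 > 0"
proof (rule ccontr)
  assume "\<not> R^2 > 0"
  then have R0: "R^2 = 0" by (simp add: not_less) 
  obtain B where B: "B > 0" "\<And>x. x \<bullet> x \<le> B * (x \<bullet> (H *v x))" using mu_bound by blast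
  have "(axis undefined 1 :: real^'d) \<bullet> axis undefined 1 \<le> 0"
    using B(2)[of "axis undefined 1"] F3[of "axis undefined 1"] R0 B(1)
    by (smt (verit) mult_nonneg_nonneg Hpsd mult_le_0_iff)
  then show False by (simp add: inner_axis_axis)
qed

lemma kpos: "\<kappa> > 0"
proof (rule ccontr)
  assume "\<not> \<kappa> > 0"
  then have "\<beta> / (2*\<kappa>) \<le> 0" using bpos by (simp add: divide_nonneg_nonpos)
  then show False using acond apos by simp
qed

lemma E9_qf: "x \<bullet> (integral\<^sup>L \<rho> (\<lambda>z. (fst z \<bullet> (K *v fst z)) *\<^sub>R outer (fst z)) *v x) = (\<integral>z. (fst z \<bullet> (K *v fst z)) * (fst z \<bullet> x)^2 \<partial>\<rho>)"
  using integral_bounded_linear[OF bl_qf[of x x] int9]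
  by (simp only: outer_qf scaleR_mv inner_scaleR_right power2_eq_square)

lemma int9x: "integrable \<rho> (\<lambda>z. (fst z \<bullet> (K *v fst z)) * (fst z \<bullet> x)^2)"
  using integrable_bounded_linear[OF bl_qf[of x x] int9]
  by (simp only: outer_qf scaleR_mv inner_scaleR_right power2_eq_square)

lemma E9_le: "(\<integral>z. (fst z \<bullet> (K *v fst z)) * (fst z \<bullet> x)^2 \<partial>\<rho>) \<le> \<kappa> * (x \<bullet> (H *v x))"
proof -
  have "x \<bullet> (integral\<^sup>L \<rho> (\<lambda>z. (fst z \<bullet> (K *v fst z)) *\<^sub>R outer (fst z)) *v x) \<le> x \<bullet> ((\<kappa> *\<^sub>R H) *v x)"
    using le9 unfolding loewner_le_def by blast
  then show ?thesis unfolding E9_qf scaleR_mv inner_scaleR_right .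
qed

sublocale hk H K \<alpha> \<beta> "R^2"
  by (unfold_locales; (rule HS KS KH HK Hpsd F6 R2pos apos bpos step))

end

lemma inner_mv_T: "y \<bullet> (M *v w) = (transpose M *v y) \<bullet> (w::real^'n)"
  using mv_inner_transpose[of "transpose M" y w] by simp

lemma qf_sandwich: "y \<bullet> ((M ** \<Theta> ** transpose M) *v z) = (transpose M *v y) \<bullet> (\<Theta> *v (transpose M *v (z::real^'n)))"
  by (simp add: matrix_vector_mul_assoc[symmetric] inner_mv_T)

lemma transpose_sandwich: "transpose \<Theta> = \<Theta> \<Longrightarrow> transpose (M ** \<Theta> ** transpose M) = M ** \<Theta> ** transpose (M::real^'n^'m)"
  by (simp add: matrix_transpose_mul matrix_mul_assoc)

lemma sym_entries: "transpose X = X \<Longrightarrow> X $ i $ j = X $ j $ i"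
  by (metis transpose_def vec_lambda_beta)

lemma funpow_pred_induct:
  assumes "P x" "\<And>y. P y \<Longrightarrow> P (f y)" shows "P ((f ^^ n) x)"
  by (induction n) (simp_all add: assms)

context hk begin

lemma Tv_lin: "Tv (a *\<^sub>R x + b *\<^sub>R y) = a *\<^sub>R Tv x + b *\<^sub>R Tv y"
  unfolding Tv_def by (simp add: vec_eq_iff algebra_simps)
lemma Dv_lin: "Dv (a *\<^sub>R x + b *\<^sub>R y) = a *\<^sub>R Dv x + b *\<^sub>R Dv y"
  unfolding Dv_def by (simp add: vec_eq_iff algebra_simps)

lemma rec_comb:
  assumes "\<And>t. f (Suc (Suc t)) = Tv (f (Suc t)) - Dv (f t)"
    and "\<And>t. g (Suc (Suc t)) = Tv (g (Suc t)) - Dv (g t)"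
  shows "(\<lambda>t. a *\<^sub>R f t + b *\<^sub>R g t) (Suc (Suc t)) = Tv ((\<lambda>t. a *\<^sub>R f t + b *\<^sub>R g t) (Suc t)) - Dv ((\<lambda>t. a *\<^sub>R f t + b *\<^sub>R g t) t)"
  unfolding assms(1)[of t] assms(2)[of t] Tv_lin Dv_lin by (simp add: algebra_simps)

end

context setting begin

abbreviation "A \<equiv> Amat \<rho> \<alpha> \<beta>"

lemma A_def': "A = Ablk H \<alpha> \<beta>" by (rule Amat_Ablk)

lemma Ttil_iter: "y \<bullet> ((Ttil \<rho> \<alpha> \<beta> ^^ t) \<Theta> *v z) = (((*v) (transpose A) ^^ t) y) \<bullet> (\<Theta> *v (((*v) (transpose A) ^^ t) z))"
proof (induction t arbitrary: y z)
  case 0 then show ?case by simp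
next
  case (Suc t)
  have "y \<bullet> ((Ttil \<rho> \<alpha> \<beta> ^^ Suc t) \<Theta> *v z) = (transpose A *v y) \<bullet> ((Ttil \<rho> \<alpha> \<beta> ^^ t) \<Theta> *v (transpose A *v z))"
    by (simp add: Ttil_def qf_sandwich)
  also have "\<dots> = (((*v) (transpose A) ^^ Suc t) y) \<bullet> (\<Theta> *v (((*v) (transpose A) ^^ Suc t) z))"
    unfolding Suc by (simp add: funpow_Suc_right del: funpow.simps)
  finally show ?case .
qed

lemma TtilT_iter: "y \<bullet> ((TtilT \<rho> \<alpha> \<beta> ^^ t) \<Theta> *v z) = (((*v) A ^^ t) y) \<bullet> (\<Theta> *v (((*v) A ^^ t) z))"
proof (induction t arbitrary: y z)
  case 0 then show ?case by simp
next
  case (Suc t)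
  have "y \<bullet> ((TtilT \<rho> \<alpha> \<beta> ^^ Suc t) \<Theta> *v z) = (A *v y) \<bullet> ((TtilT \<rho> \<alpha> \<beta> ^^ t) \<Theta> *v (A *v z))"
    using qf_sandwich[of y "transpose A"] by (simp add: TtilT_def)
  also have "\<dots> = (((*v) A ^^ Suc t) y) \<bullet> (\<Theta> *v (((*v) A ^^ Suc t) z))"
    unfolding Suc by (simp add: funpow_Suc_right del: funpow.simps)
  finally show ?case .
qed

lemma Ttil_sym: "transpose \<Theta> = \<Theta> \<Longrightarrow> transpose ((Ttil \<rho> \<alpha> \<beta> ^^ t) \<Theta>) = (Ttil \<rho> \<alpha> \<beta> ^^ t) \<Theta>"
  by (rule funpow_pred_induct[where P="\<lambda>X. transpose X = X"]) (simp_all add: Ttil_def transpose_sandwich)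

lemma TtilT_sym: "transpose \<Theta> = \<Theta> \<Longrightarrow> transpose ((TtilT \<rho> \<alpha> \<beta> ^^ t) \<Theta>) = (TtilT \<rho> \<alpha> \<beta> ^^ t) \<Theta>"
  by (rule funpow_pred_induct[where P="\<lambda>X. transpose X = X"])
     (simp_all add: TtilT_def transpose_sandwich[of _ "transpose A", simplified])

lemma v12: "v1 (pv f g) = f" "v2 (pv f g) = g"
  by (simp_all add: v1_def v2_def pv_def)

lemma N_qf: "pv x1 x2 \<bullet> (Nmat \<rho> \<alpha> \<beta> *v pv y1 y2) = (\<beta> *\<^sub>R x1 + \<alpha> *\<^sub>R x2) \<bullet> (H *v (\<beta> *\<^sub>R y1 + \<alpha> *\<^sub>R y2))"
  unfolding Nmat_def blockm_mv inner_pv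
  by (simp add: scaleR_mv inner_add_left inner_add_right matrix_vector_right_distrib matrix_vector_mult_scaleR
      HS1[of x2 y1] HS1[of x1 y2] algebra_simps power2_eq_square)

lemma U_qf: "pv x1 x2 \<bullet> (Upsilon \<rho> *v pv y1 y2) = (x1 + x2) \<bullet> (H *v (y1 + y2))"
  unfolding Upsilon_def blockm_mv inner_pv
  by (simp add: inner_add_left inner_add_right matrix_vector_right_distrib algebra_simps)

lemma N_sym: "transpose (Nmat \<rho> \<alpha> \<beta>) = Nmat \<rho> \<alpha> \<beta>"
  by (simp add: Nmat_def transpose_blockm transpose_scalar HT)
lemma U_sym: "transpose (Upsilon \<rho>) = Upsilon \<rho>"
  by (simp add: Upsilon_def transpose_blockm HT)

end

context setting begin

definition "seqT y t = ((*v) (transpose A) ^^ t) y"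
definition "seqA y t = ((*v) A ^^ t) y"

lemma seqT_Suc: "seqT y (Suc t) = transpose A *v seqT y t" by (simp add: seqT_def)
lemma seqA_Suc: "seqA y (Suc t) = A *v seqA y t" by (simp add: seqA_def)

lemma recT: "v1 (seqT y (Suc (Suc t))) = Tv (v1 (seqT y (Suc t))) - Dv (v1 (seqT y t))"
            "v2 (seqT y (Suc (Suc t))) = Tv (v2 (seqT y (Suc t))) - Dv (v2 (seqT y t))"
  unfolding seqT_Suc A_def' by (rule AT_rec[OF HT])+

lemma recA: "v1 (seqA y (Suc (Suc t))) = Tv (v1 (seqA y (Suc t))) - Dv (v1 (seqA y t))"
            "v2 (seqA y (Suc (Suc t))) = Tv (v2 (seqA y (Suc t))) - Dv (v2 (seqA y t))"
  unfolding seqA_Suc A_def' by (rule A_rec)+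

lemma qfN: "y \<bullet> (Nmat \<rho> \<alpha> \<beta> *v y) = (\<beta> *\<^sub>R v1 y + \<alpha> *\<^sub>R v2 y) \<bullet> (H *v (\<beta> *\<^sub>R v1 y + \<alpha> *\<^sub>R v2 y))"
  using N_qf[of "v1 y" "v2 y" "v1 y" "v2 y"] pv_split[of y] by simp

lemma qfU: "y \<bullet> (Upsilon \<rho> *v y) = (v1 y + v2 y) \<bullet> (H *v (v1 y + v2 y))"
  using U_qf[of "v1 y" "v2 y" "v1 y" "v2 y"] pv_split[of y] by simp

lemma sumN_bound: "(\<Sum>t<n. x \<bullet> ((Ttil \<rho> \<alpha> \<beta> ^^ t) (Nmat \<rho> \<alpha> \<beta>) *v x))
   \<le> Vf (\<beta> *\<^sub>R v1 (seqT x 0) + \<alpha> *\<^sub>R v2 (seqT x 0)) (\<beta> *\<^sub>R v1 (seqT x 1) + \<alpha> *\<^sub>R v2 (seqT x 1))"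
proof -
  define p where "p t = \<beta> *\<^sub>R v1 (seqT x t) + \<alpha> *\<^sub>R v2 (seqT x t)" for t
  have rec: "p (Suc (Suc t)) = Tv (p (Suc t)) - Dv (p t)" for t
    unfolding p_def by (rule rec_comb[where f="\<lambda>t. v1 (seqT x t)" and g="\<lambda>t. v2 (seqT x t)", OF recT])
  have "(\<Sum>t<n. x \<bullet> ((Ttil \<rho> \<alpha> \<beta> ^^ t) (Nmat \<rho> \<alpha> \<beta>) *v x)) = (\<Sum>t<n. p t \<bullet> (H *v p t))"
    by (simp add: Ttil_iter qfN p_def seqT_def)
  also have "\<dots> \<le> Vf (p 0) (p 1)" by (rule sum_bound[where r=p, OF rec])
  finally show ?thesis unfolding p_def by simp
qed

lemma sumU_bound: "(\<Sum>t<n. x \<bullet> ((TtilT \<rho> \<alpha> \<beta> ^^ t) (Upsilon \<rho>) *v x))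
   \<le> Vf (v1 (seqA x 0) + v2 (seqA x 0)) (v1 (seqA x 1) + v2 (seqA x 1))"
proof -
  define p where "p t = 1 *\<^sub>R v1 (seqA x t) + 1 *\<^sub>R v2 (seqA x t)" for t
  have rec: "p (Suc (Suc t)) = Tv (p (Suc t)) - Dv (p t)" for t
    unfolding p_def by (rule rec_comb[where f="\<lambda>t. v1 (seqA x t)" and g="\<lambda>t. v2 (seqA x t)", OF recA])
  have "(\<Sum>t<n. x \<bullet> ((TtilT \<rho> \<alpha> \<beta> ^^ t) (Upsilon \<rho>) *v x)) = (\<Sum>t<n. p t \<bullet> (H *v p t))"
    by (simp add: TtilT_iter qfU p_def seqA_def)
  also have "\<dots> \<le> Vf (p 0) (p 1)" by (rule sum_bound[where r=p, OF rec])
  finally show ?thesis unfolding p_def by simp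
qed

lemma summ_N: "summable (\<lambda>t. (Ttil \<rho> \<alpha> \<beta> ^^ t) (Nmat \<rho> \<alpha> \<beta>))"
proof (rule summable_psd)
  show "(Ttil \<rho> \<alpha> \<beta> ^^ t) (Nmat \<rho> \<alpha> \<beta>) $ i $ j = (Ttil \<rho> \<alpha> \<beta> ^^ t) (Nmat \<rho> \<alpha> \<beta>) $ j $ i" for t i j
    by (rule sym_entries[OF Ttil_sym[OF N_sym]])
  show "0 \<le> x \<bullet> ((Ttil \<rho> \<alpha> \<beta> ^^ t) (Nmat \<rho> \<alpha> \<beta>) *v x)" for t x
    by (simp add: Ttil_iter qfN Hpsd)
  show "\<exists>B. \<forall>n. (\<Sum>t<n. x \<bullet> ((Ttil \<rho> \<alpha> \<beta> ^^ t) (Nmat \<rho> \<alpha> \<beta>) *v x)) \<le> B" for x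
    using sumN_bound by blast
qed

lemma summ_U: "summable (\<lambda>t. (TtilT \<rho> \<alpha> \<beta> ^^ t) (Upsilon \<rho>))"
proof (rule summable_psd)
  show "(TtilT \<rho> \<alpha> \<beta> ^^ t) (Upsilon \<rho>) $ i $ j = (TtilT \<rho> \<alpha> \<beta> ^^ t) (Upsilon \<rho>) $ j $ i" for t i j
    by (rule sym_entries[OF TtilT_sym[OF U_sym]])
  show "0 \<le> x \<bullet> ((TtilT \<rho> \<alpha> \<beta> ^^ t) (Upsilon \<rho>) *v x)" for t x
    by (simp add: TtilT_iter qfU Hpsd)
  show "\<exists>B. \<forall>n. (\<Sum>t<n. x \<bullet> ((TtilT \<rho> \<alpha> \<beta> ^^ t) (Upsilon \<rho>) *v x)) \<le> B" for x
    using sumU_bound by blast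
qed

lemma summ_norm: "summable (\<lambda>t. seqT y t \<bullet> seqT y t)"
proof -
  obtain B where B: "B > 0" "\<And>x. x \<bullet> x \<le> B * (x \<bullet> (H *v x))" using mu_bound by blast
  define f where "f t = v1 (seqT y t)" for t
  define g where "g t = v2 (seqT y t)" for t
  have rf: "f (Suc (Suc t)) = Tv (f (Suc t)) - Dv (f t)" for t unfolding f_def by (rule recT)
  have rg: "g (Suc (Suc t)) = Tv (g (Suc t)) - Dv (g t)" for t unfolding g_def by (rule recT)
  have e: "seqT y t \<bullet> seqT y t = f t \<bullet> f t + g t \<bullet> g t" for t
    using inner_pv[of "f t" "g t" "f t" "g t"] pv_split[of "seqT y t"] unfolding f_def g_def by simp
  show ?thesis
  proof (rule bounded_imp_summable)
    show "0 \<le> seqT y n \<bullet> seqT y n" for n by simp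
    show "(\<Sum>k\<le>n. seqT y k \<bullet> seqT y k) \<le> B * (Vf (f 0) (f 1) + Vf (g 0) (g 1))" for n
    proof -
      have "(\<Sum>k\<le>n. seqT y k \<bullet> seqT y k) \<le> (\<Sum>k<Suc n. B * (f k \<bullet> (H *v f k)) + B * (g k \<bullet> (H *v g k)))"
        unfolding lessThan_Suc_atMost e by (rule sum_mono) (simp add: B(2) add_mono)
      also have "\<dots> = B * ((\<Sum>k<Suc n. f k \<bullet> (H *v f k)) + (\<Sum>k<Suc n. g k \<bullet> (H *v g k)))"
        by (simp add: sum.distrib sum_distrib_left algebra_simps)
      also have "\<dots> \<le> B * (Vf (f 0) (f 1) + Vf (g 0) (g 1))"
        using sum_bound[where r=f and n="Suc n", OF rf] sum_bound[where r=g and n="Suc n", OF rg] B(1)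
        by (intro mult_left_mono add_mono) auto
      finally show ?thesis .
    qed
  qed
qed

lemma inv_a: "inv_exists (Ttil \<rho> \<alpha> \<beta>)"
  unfolding inv_exists_def
proof
  fix \<Theta> :: "real^('d+'d)^('d+'d)"
  obtain C where C: "C > 0" "\<And>x. norm (\<Theta> *v x) \<le> norm x * C"
    using bounded_linear.pos_bounded[of "\<lambda>x. \<Theta> *v x"] linear_conv_bounded_linear matrix_vector_mul_linear by blast
  show "summable (\<lambda>t. (Ttil \<rho> \<alpha> \<beta> ^^ t) \<Theta>)"
  proof (rule summable_matrix)
    fix i j
    let ?u = "\<lambda>t. seqT (axis i 1) t" and ?w = "\<lambda>t. seqT (axis j 1) t"
    have ent: "(Ttil \<rho> \<alpha> \<beta> ^^ t) \<Theta> $ i $ j = ?u t \<bullet> (\<Theta> *v ?w t)" for t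
      unfolding entry_inner[symmetric, of "(Ttil \<rho> \<alpha> \<beta> ^^ t) \<Theta>" i j] Ttil_iter seqT_def ..
    have bnd: "norm ((Ttil \<rho> \<alpha> \<beta> ^^ t) \<Theta> $ i $ j) \<le> C * (?u t \<bullet> ?u t + ?w t \<bullet> ?w t)" for t
    proof -
      have "norm (?u t \<bullet> (\<Theta> *v ?w t)) \<le> norm (?u t) * norm (\<Theta> *v ?w t)"
        by (simp add: Cauchy_Schwarz_ineq2)
      also have "\<dots> \<le> norm (?u t) * (norm (?w t) * C)" using C(2) by (simp add: mult_left_mono)
      also have "\<dots> \<le> C * ((norm (?u t))^2 + (norm (?w t))^2)"
      proof -
        have sq: "0 \<le> (norm (?u t) - norm (?w t))^2" by simp
        have "norm (?u t) * norm (?w t) \<le> (norm (?u t))^2 + (norm (?w t))^2"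
        proof -
          have h1: "2 * (norm (?u t) * norm (?w t)) \<le> norm (?u t) * norm (?u t) + norm (?w t) * norm (?w t)"
            using sq by (simp add: power2_eq_square algebra_simps)
          have h2: "0 \<le> norm (?u t) * norm (?w t)" by simp
          show ?thesis using h1 h2 unfolding power2_eq_square by linarith
        qed
        then have "C * (norm (?u t) * norm (?w t)) \<le> C * ((norm (?u t))^2 + (norm (?w t))^2)"
          using C(1) by (intro mult_left_mono) auto
        then show ?thesis by (simp add: algebra_simps)
      qed
      finally show ?thesis unfolding ent by (simp add: power2_norm_eq_inner)
    qed
    show "summable (\<lambda>t. (Ttil \<rho> \<alpha> \<beta> ^^ t) \<Theta> $ i $ j)"
      by (rule summable_comparison_test[OF _ summable_mult[OF summable_add[OF summ_norm summ_norm]]])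
         (use bnd in blast)
  qed
qed

end

context setting begin

definition "Em a = outer a - H"

lemma Em_sym: "transpose (Em a) = Em a"
  by (simp add: Em_def transpose_diff' transpose_outer HT)

lemma JA: "Jmat \<alpha> \<beta> a - A = blockm (-(\<beta> *\<^sub>R Em a)) (-(\<beta> *\<^sub>R Em a)) (-(\<alpha> *\<^sub>R Em a)) (-(\<alpha> *\<^sub>R Em a))"
  by (simp add: Jmat_def Amat_def blockm_diff Em_def algebra_simps)

lemma JAT_mv: "transpose (Jmat \<alpha> \<beta> a - A) *v pv x1 x2 = pv (- (Em a *v (\<beta> *\<^sub>R x1 + \<alpha> *\<^sub>R x2))) (- (Em a *v (\<beta> *\<^sub>R x1 + \<alpha> *\<^sub>R x2)))"
  unfolding JA transpose_blockm
  by (simp add: transpose_uminus' transpose_scalar Em_sym blockm_mv uminus_mv scaleR_mv algebra_simps)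

lemma JA_mv: "(Jmat \<alpha> \<beta> a - A) *v pv x1 x2 = pv (\<beta> *\<^sub>R (- (Em a *v (x1 + x2)))) (\<alpha> *\<^sub>R (- (Em a *v (x1 + x2))))"
  unfolding JA
  by (simp add: blockm_mv uminus_mv scaleR_mv algebra_simps)

lemma LB: "Vf ((\<alpha>+\<beta>) *\<^sub>R m) ((2*\<alpha>+\<beta>) *\<^sub>R m - (\<alpha>+\<beta>)^2 *\<^sub>R (H *v m))
   \<le> (2/3) * (\<gamma> * (m \<bullet> m) + (\<alpha>/\<beta>) * (m \<bullet> (K *v m)))"
proof -
  have nn: "0 \<le> ((\<alpha>+\<beta>)^2/3) * (m \<bullet> (H *v m) - 2*\<gamma>*((H *v m) \<bullet> (H *v m)))"
    using G_nonneg[of m] by simp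
  show ?thesis using I2[of m] nn by linarith
qed

definition "Y = inv_apply (Ttil \<rho> \<alpha> \<beta>) (Nmat \<rho> \<alpha> \<beta>)"
definition "Y' = inv_apply (TtilT \<rho> \<alpha> \<beta>) (Upsilon \<rho>)"

lemma Y_qf: "v \<bullet> (Y *v v) = (\<Sum>t. v \<bullet> ((Ttil \<rho> \<alpha> \<beta> ^^ t) (Nmat \<rho> \<alpha> \<beta>) *v v))"
  unfolding Y_def inv_apply_def by (rule bounded_linear.suminf[OF bl_qf summ_N])

lemma Y'_qf: "v \<bullet> (Y' *v v) = (\<Sum>t. v \<bullet> ((TtilT \<rho> \<alpha> \<beta> ^^ t) (Upsilon \<rho>) *v v))"
  unfolding Y'_def inv_apply_def by (rule bounded_linear.suminf[OF bl_qf summ_U])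

lemma YB: "pv m m \<bullet> (Y *v pv m m) \<le> (2/3) * (\<gamma> * (m \<bullet> m) + (\<alpha>/\<beta>) * (m \<bullet> (K *v m)))"
proof -
  have s0: "seqT (pv m m) 0 = pv m m" by (simp add: seqT_def)
  have s1: "seqT (pv m m) 1 = transpose A *v pv m m" by (simp add: seqT_def)
  have p0: "\<beta> *\<^sub>R v1 (seqT (pv m m) 0) + \<alpha> *\<^sub>R v2 (seqT (pv m m) 0) = (\<alpha>+\<beta>) *\<^sub>R m"
    by (simp add: s0 v12 algebra_simps)
  have p1: "\<beta> *\<^sub>R v1 (seqT (pv m m) 1) + \<alpha> *\<^sub>R v2 (seqT (pv m m) 1) = (2*\<alpha>+\<beta>) *\<^sub>R m - (\<alpha>+\<beta>)^2 *\<^sub>R (H *v m)"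
    unfolding s1 A_def' AblkT_mv[OF HT] v12 by (simp add: vec_eq_iff algebra_simps power2_eq_square)
  have "pv m m \<bullet> (Y *v pv m m) \<le> Vf ((\<alpha>+\<beta>) *\<^sub>R m) ((2*\<alpha>+\<beta>) *\<^sub>R m - (\<alpha>+\<beta>)^2 *\<^sub>R (H *v m))"
    unfolding Y_qf
    apply (rule suminf_le_const[OF bounded_linear.summable[OF bl_qf summ_N]])
    using sumN_bound[where x="pv m m"] unfolding p0 p1 by simp
  then show ?thesis using LB[of m] by linarith
qed

lemma Y'B: "pv (\<beta> *\<^sub>R m) (\<alpha> *\<^sub>R m) \<bullet> (Y' *v pv (\<beta> *\<^sub>R m) (\<alpha> *\<^sub>R m)) \<le> (2/3) * (\<gamma> * (m \<bullet> m) + (\<alpha>/\<beta>) * (m \<bullet> (K *v m)))"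
proof -
  let ?v = "pv (\<beta> *\<^sub>R m) (\<alpha> *\<^sub>R m)"
  have s0: "seqA ?v 0 = ?v" by (simp add: seqA_def)
  have s1: "seqA ?v 1 = A *v ?v" by (simp add: seqA_def)
  have p0: "v1 (seqA ?v 0) + v2 (seqA ?v 0) = (\<alpha>+\<beta>) *\<^sub>R m"
    by (simp add: s0 v12 algebra_simps)
  have p1: "v1 (seqA ?v 1) + v2 (seqA ?v 1) = (2*\<alpha>+\<beta>) *\<^sub>R m - (\<alpha>+\<beta>)^2 *\<^sub>R (H *v m)"
    unfolding s1 A_def' Ablk_mv v12 by (simp add: vec_eq_iff algebra_simps power2_eq_square)
  have "?v \<bullet> (Y' *v ?v) \<le> Vf ((\<alpha>+\<beta>) *\<^sub>R m) ((2*\<alpha>+\<beta>) *\<^sub>R m - (\<alpha>+\<beta>)^2 *\<^sub>R (H *v m))"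
    unfolding Y'_qf
    apply (rule suminf_le_const[OF bounded_linear.summable[OF bl_qf summ_U]])
    using sumU_bound[where x="?v"] unfolding p0 p1 by simp
  then show ?thesis using LB[of m] by linarith
qed

end

context setting begin

definition "gfun w z = (2/3*\<gamma>) * ((norm (fst z))^2 * (fst z \<bullet> w)^2) + (-4/3*\<gamma>) * ((fst z \<bullet> w) * (fst z \<bullet> (H *v w)))
   + (2/3*(\<alpha>/\<beta>)) * ((fst z \<bullet> (K *v fst z)) * (fst z \<bullet> w)^2) + (-4/3*(\<alpha>/\<beta>)) * (fst z \<bullet> w)^2
   + (2/3) * (\<gamma> * ((H *v w) \<bullet> (H *v w)) + (\<alpha>/\<beta>) * (w \<bullet> (H *v w)))"

lemma pw: "(2/3) * (\<gamma> * ((- (Em (fst z) *v w)) \<bullet> (- (Em (fst z) *v w))) + (\<alpha>/\<beta>) * ((- (Em (fst z) *v w)) \<bullet> (K *v (- (Em (fst z) *v w)))))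
   = gfun w z"
proof -
  obtain a where a: "fst z = a" by blast
  have e: "Em a *v w = (a \<bullet> w) *\<^sub>R a - H *v w"
    by (simp add: Em_def matrix_vector_mult_diff_rdistrib outer_mv)
  have nn: "norm a * norm a = a \<bullet> a" by (metis power2_eq_square power2_norm_eq_inner)
  show ?thesis unfolding gfun_def a e
    by (simp add: normal power2_eq_square uminus_mv algebra_simps nn)
qed

lemma int_g: "integrable \<rho> (gfun w)"
  unfolding gfun_def
  using int7x[of w] int_bil[of w "H *v w"] int9x[of w] int_sq[of w]
  by (intro Bochner_Integration.integrable_add integrable_mult_right integrable_const) auto

lemma integral_g: "integral\<^sup>L \<rho> (gfun w) \<le> (2/3) * (w \<bullet> (H *v w))"
proof -
  have i7: "integrable \<rho> (\<lambda>z. (norm (fst z))^2 * (fst z \<bullet> w)^2)" by (rule int7x)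
  have i2: "integrable \<rho> (\<lambda>z. (fst z \<bullet> w) * (fst z \<bullet> (H *v w)))" by (rule int_bil)
  have i9: "integrable \<rho> (\<lambda>z. (fst z \<bullet> (K *v fst z)) * (fst z \<bullet> w)^2)" by (rule int9x)
  have i5: "integrable \<rho> (\<lambda>z. (fst z \<bullet> w)^2)" by (rule int_sq)
  define E7 where "E7 = (\<integral>z. (norm (fst z))^2 * (fst z \<bullet> w)^2 \<partial>\<rho>)"
  define E9 where "E9 = (\<integral>z. (fst z \<bullet> (K *v fst z)) * (fst z \<bullet> w)^2 \<partial>\<rho>)"
  have e2: "(\<integral>z. (fst z \<bullet> w) * (fst z \<bullet> (H *v w)) \<partial>\<rho>) = (H *v w) \<bullet> (H *v w)"
    using H_bil[of w "H *v w"] HS[of w "H *v w"] by simp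
  have e5: "(\<integral>z. (fst z \<bullet> w)^2 \<partial>\<rho>) = w \<bullet> (H *v w)"
    using H_bil[of w w] by (simp add: power2_eq_square)
  have val: "integral\<^sup>L \<rho> (gfun w) = (2/3*\<gamma>) * E7 + (-4/3*\<gamma>) * ((H *v w) \<bullet> (H *v w))
     + (2/3*(\<alpha>/\<beta>)) * E9 + (-4/3*(\<alpha>/\<beta>)) * (w \<bullet> (H *v w))
     + (2/3) * (\<gamma> * ((H *v w) \<bullet> (H *v w)) + (\<alpha>/\<beta>) * (w \<bullet> (H *v w)))"
    unfolding gfun_def E7_def E9_def e2[symmetric] e5[symmetric]
    using i7 i2 i9 i5
    by (simp add: Bochner_Integration.integral_add integrable_mult_right prob_space)
  have g0: "\<gamma> > 0" using apos bpos unfolding \<gamma>_def by simp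
  have ab0: "\<alpha>/\<beta> > 0" using apos bpos by simp
  have b7: "E7 \<le> R^2 * (w \<bullet> (H *v w))" unfolding E7_def by (rule E7_le)
  have b9: "E9 \<le> \<kappa> * (w \<bullet> (H *v w))" unfolding E9_def by (rule E9_le)
  have hh: "0 \<le> (H *v w) \<bullet> (H *v w)" by simp
  have q: "0 \<le> w \<bullet> (H *v w)" by (rule Hpsd)
  have c1: "\<gamma> * R^2 \<le> 1/2" using gam_R2 by simp
  have c2: "(\<alpha>/\<beta>) * \<kappa> \<le> 1/2"
  proof -
    have "\<alpha> * (2*\<kappa>) \<le> \<beta>" using acond kpos by (simp add: le_divide_eq)
    then show ?thesis using bpos by (simp add: field_simps)
  qed
  have "integral\<^sup>L \<rho> (gfun w) = (2/3) * (\<gamma> * (E7 - (H *v w) \<bullet> (H *v w)) + (\<alpha>/\<beta>) * (E9 - w \<bullet> (H *v w)))"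
    unfolding val by (simp add: algebra_simps)
  also have "\<dots> \<le> (2/3) * (\<gamma> * (R^2 * (w \<bullet> (H *v w))) + (\<alpha>/\<beta>) * (\<kappa> * (w \<bullet> (H *v w))))"
  proof -
    have d7: "E7 - (H *v w) \<bullet> (H *v w) \<le> R^2 * (w \<bullet> (H *v w))" using b7 hh by linarith
    have d9: "E9 - w \<bullet> (H *v w) \<le> \<kappa> * (w \<bullet> (H *v w))" using b9 q by linarith
    show ?thesis using d7 d9 g0 ab0 by (intro mult_left_mono add_mono) auto
  qed
  also have "\<dots> = (2/3) * ((\<gamma> * R^2 + (\<alpha>/\<beta>) * \<kappa>) * (w \<bullet> (H *v w)))" by (simp add: algebra_simps)
  also have "\<dots> \<le> (2/3) * (1 * (w \<bullet> (H *v w)))"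
  proof -
    have c3: "\<gamma> * R^2 + (\<alpha>/\<beta>) * \<kappa> \<le> 1" using c1 c2 by linarith
    show ?thesis using c3 q by (intro mult_left_mono mult_right_mono) auto
  qed
  finally show ?thesis by simp
qed

end

context setting begin

lemma mop_b: "loewner_le (Mop \<rho> \<alpha> \<beta> Y) ((2/3) *\<^sub>R Nmat \<rho> \<alpha> \<beta>)"
  unfolding loewner_le_def
proof
  fix x :: "real^('d+'d)"
  define w where "w = \<beta> *\<^sub>R v1 x + \<alpha> *\<^sub>R v2 x"
  define F where "F z = (Jmat \<alpha> \<beta> (fst z) - A) ** Y ** transpose (Jmat \<alpha> \<beta> (fst z) - A)" for z :: "(real^'d) \<times> real"
  have rhs: "x \<bullet> (((2/3) *\<^sub>R Nmat \<rho> \<alpha> \<beta>) *v x) = (2/3) * (w \<bullet> (H *v w))"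
    by (simp add: scaleR_mv qfN w_def)
  have M: "Mop \<rho> \<alpha> \<beta> Y = integral\<^sup>L \<rho> F" unfolding Mop_def F_def ..
  show "x \<bullet> (Mop \<rho> \<alpha> \<beta> Y *v x) \<le> x \<bullet> (((2/3) *\<^sub>R Nmat \<rho> \<alpha> \<beta>) *v x)"
  proof (cases "integrable \<rho> F")
    case False
    then show ?thesis unfolding M rhs using not_integrable_integral_eq[OF False] Hpsd[of w] by simp
  next
    case True
    have pt: "x \<bullet> (F z *v x) \<le> gfun w z" for z
    proof -
      have "x \<bullet> (F z *v x) = pv (- (Em (fst z) *v w)) (- (Em (fst z) *v w)) \<bullet> (Y *v pv (- (Em (fst z) *v w)) (- (Em (fst z) *v w)))"
        unfolding F_def qf_sandwich using JAT_mv[of "fst z" "v1 x" "v2 x"] pv_split[of x] by (simp add: w_def)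
      also have "\<dots> \<le> gfun w z" using YB pw by metis
      finally show ?thesis .
    qed
    have "x \<bullet> (Mop \<rho> \<alpha> \<beta> Y *v x) = (\<integral>z. x \<bullet> (F z *v x) \<partial>\<rho>)"
      unfolding M by (rule integral_bounded_linear[OF bl_qf True, symmetric])
    also have "\<dots> \<le> integral\<^sup>L \<rho> (gfun w)"
      by (rule integral_mono[OF integrable_bounded_linear[OF bl_qf True] int_g pt])
    also have "\<dots> \<le> (2/3) * (w \<bullet> (H *v w))" by (rule integral_g)
    finally show ?thesis unfolding rhs .
  qed
qed

lemma mopT_c: "loewner_le (MopT \<rho> \<alpha> \<beta> Y') ((2/3) *\<^sub>R Upsilon \<rho>)"
  unfolding loewner_le_def
proof
  fix x :: "real^('d+'d)"
  define w where "w = v1 x + v2 x"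
  define F where "F z = transpose (Jmat \<alpha> \<beta> (fst z) - A) ** Y' ** (Jmat \<alpha> \<beta> (fst z) - A)" for z :: "(real^'d) \<times> real"
  have rhs: "x \<bullet> (((2/3) *\<^sub>R Upsilon \<rho>) *v x) = (2/3) * (w \<bullet> (H *v w))"
    by (simp add: scaleR_mv qfU w_def)
  have M: "MopT \<rho> \<alpha> \<beta> Y' = integral\<^sup>L \<rho> F" unfolding MopT_def F_def ..
  show "x \<bullet> (MopT \<rho> \<alpha> \<beta> Y' *v x) \<le> x \<bullet> (((2/3) *\<^sub>R Upsilon \<rho>) *v x)"
  proof (cases "integrable \<rho> F")
    case False
    then show ?thesis unfolding M rhs using not_integrable_integral_eq[OF False] Hpsd[of w] by simp
  next
    case True
    have pt: "x \<bullet> (F z *v x) \<le> gfun w z" for z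
    proof -
      let ?m = "- (Em (fst z) *v w)"
      have "x \<bullet> (F z *v x) = pv (\<beta> *\<^sub>R ?m) (\<alpha> *\<^sub>R ?m) \<bullet> (Y' *v pv (\<beta> *\<^sub>R ?m) (\<alpha> *\<^sub>R ?m))"
        unfolding F_def using qf_sandwich[of x "transpose (Jmat \<alpha> \<beta> (fst z) - A)" Y' x]
          JA_mv[of "fst z" "v1 x" "v2 x"] pv_split[of x] by (simp add: w_def)
      also have "\<dots> \<le> gfun w z" using Y'B pw by metis
      finally show ?thesis .
    qed
    have "x \<bullet> (MopT \<rho> \<alpha> \<beta> Y' *v x) = (\<integral>z. x \<bullet> (F z *v x) \<partial>\<rho>)"
      unfolding M by (rule integral_bounded_linear[OF bl_qf True, symmetric])
    also have "\<dots> \<le> integral\<^sup>L \<rho> (gfun w)"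
      by (rule integral_mono[OF integrable_bounded_linear[OF bl_qf True] int_g pt])
    also have "\<dots> \<le> (2/3) * (w \<bullet> (H *v w))" by (rule integral_g)
    finally show ?thesis unfolding rhs .
  qed
qed

end

lemma integrable_vec:
  fixes f :: "'a \<Rightarrow> real^'n"
  assumes "\<And>i. integrable M (\<lambda>z. f z $ i)"
  shows "integrable M f"
proof -
  have e: "f = (\<lambda>z. \<Sum>i\<in>UNIV. (f z $ i) *\<^sub>R axis i 1)"
    by (rule ext) (simp add: vec_eq_iff axis_def if_distrib cong: if_cong)
  show ?thesis by (subst e) (auto intro!: Bochner_Integration.integrable_sum integrable_scaleR_left assms)
qed

lemma integrable_mat:
  fixes f :: "'a \<Rightarrow> real^'n^'m"
  assumes "\<And>i j. integrable M (\<lambda>z. f z $ i $ j)"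
  shows "integrable M f"
proof -
  have mult_if: "x * (if P then 1 else 0) = (if P then x else 0)" for x :: real and P by simp
  have ax: "axis i (axis j (1::real)) $ k $ l = (if i = k \<and> j = l then 1 else 0)" for i k :: 'm and j l :: 'n
    by (auto simp: axis_def)
  have e: "f = (\<lambda>z. \<Sum>i\<in>UNIV. \<Sum>j\<in>UNIV. (f z $ i $ j) *\<^sub>R axis i (axis j 1))"
  proof (rule ext)
    fix z
    have "(\<Sum>i\<in>UNIV. \<Sum>j\<in>UNIV. (f z $ i $ j) *\<^sub>R axis i (axis j (1::real))) $ k $ l = f z $ k $ l" for k l
    proof -
      have "(\<Sum>i\<in>UNIV. \<Sum>j\<in>UNIV. (f z $ i $ j) *\<^sub>R axis i (axis j (1::real))) $ k $ l
          = (\<Sum>i\<in>UNIV. \<Sum>j\<in>UNIV. (f z $ i $ j) * (if i = k \<and> j = l then 1 else 0))"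
        by (simp add: ax)
      also have "\<dots> = (\<Sum>i\<in>UNIV. if i = k then (\<Sum>j\<in>UNIV. if j = l then f z $ i $ j else 0) else 0)"
        by (rule sum.cong[OF refl]) (auto simp: mult_if)
      also have "\<dots> = f z $ k $ l" by simp
      finally show ?thesis .
    qed
    then show "f z = (\<Sum>i\<in>UNIV. \<Sum>j\<in>UNIV. (f z $ i $ j) *\<^sub>R axis i (axis j 1))"
      by (simp add: vec_eq_iff)
  qed
  show ?thesis by (subst e) (auto intro!: Bochner_Integration.integrable_sum integrable_scaleR_left assms)
qed

lemma cont_pv[continuous_intros]: "continuous_on S f \<Longrightarrow> continuous_on S g \<Longrightarrow> continuous_on S (\<lambda>z. pv (f z) (g z))"
  unfolding pv_def
  apply (intro continuous_on_vec_lambda)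
  subgoal for i by (cases i) (auto intro: continuous_on_component)
  done

lemma cont_mv[continuous_intros]: "continuous_on S f \<Longrightarrow> continuous_on S (\<lambda>z. (M::real^'n^'m) *v f z)"
proof -
  assume "continuous_on S f"
  moreover have "bounded_linear (\<lambda>x. M *v x)"
    using linear_conv_bounded_linear matrix_vector_mul_linear by blast
  ultimately show ?thesis using bounded_linear.continuous_on by blast
qed

lemma norm_add_sq: "(norm (x + y))^2 \<le> 2 * (norm x)^2 + 2 * (norm (y::'a::real_inner))^2"
proof -
  have "(norm (x + y))^2 \<le> (norm x + norm y)^2"
    by (simp add: norm_triangle_ineq power_mono)
  also have "\<dots> \<le> 2 * (norm x)^2 + 2 * (norm y)^2"
    using sum_squares_bound[of "norm x" "norm y"] by (simp add: power2_sum)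
  finally show ?thesis .
qed

context setting begin

lemma JT_split: "transpose (Jmat \<alpha> \<beta> a) *v x = transpose A *v x
    + pv (- (Em a *v (\<beta> *\<^sub>R v1 x + \<alpha> *\<^sub>R v2 x))) (- (Em a *v (\<beta> *\<^sub>R v1 x + \<alpha> *\<^sub>R v2 x)))"
proof -
  have "transpose (Jmat \<alpha> \<beta> a) = transpose A + transpose (Jmat \<alpha> \<beta> a - A)"
    by (simp add: transpose_diff')
  then show ?thesis using JAT_mv[of a "v1 x" "v2 x"] pv_split[of x]
    by (simp add: matrix_vector_mult_add_rdistrib)
qed

lemma Em_mv: "Em a *v w = (a \<bullet> w) *\<^sub>R a - H *v w"
  by (simp add: Em_def matrix_vector_mult_diff_rdistrib outer_mv)

lemma int_norm4: "integrable \<rho> (\<lambda>z. (norm (fst z))^4)"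
proof -
  have e: "(norm a)^4 = (\<Sum>i\<in>UNIV. (norm a)^2 * (a \<bullet> axis i 1)^2)" for a :: "real^'d"
  proof -
    have "(\<Sum>i\<in>UNIV. (a \<bullet> axis i 1)^2) = (\<Sum>i\<in>UNIV. a $ i * a $ i)"
      by (simp add: inner_axis power2_eq_square)
    also have "\<dots> = a \<bullet> a" by (simp add: inner_vec_def)
    finally have "(\<Sum>i\<in>UNIV. (a \<bullet> axis i 1)^2) = a \<bullet> a" .
    then show ?thesis by (simp add: sum_distrib_left[symmetric] power2_norm_eq_inner[symmetric]
        flip: power_add)
  qed
  show ?thesis unfolding e by (rule Bochner_Integration.integrable_sum) (rule int7x)
qed

lemma JT_bound: fixes x :: "real^('d+'d)" shows "\<exists>c0 c1. \<forall>a. (norm (transpose (Jmat \<alpha> \<beta> a) *v x))^2 \<le> c0 + c1 * (norm a)^4"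
proof -
  define w where "w = \<beta> *\<^sub>R v1 x + \<alpha> *\<^sub>R v2 x"
  define u where "u = transpose A *v x"
  have "(norm (transpose (Jmat \<alpha> \<beta> a) *v x))^2 \<le> 2 * (norm u)^2 + 8 * (norm (H *v w))^2 + 8 * (norm w)^2 * (norm a)^4" for a
  proof -
    define m where "m = - (Em a *v w)"
    have m: "m = H *v w - (a \<bullet> w) *\<^sub>R a" unfolding m_def Em_mv by simp
    have nm: "(norm m)^2 \<le> 2 * (norm (H *v w))^2 + 2 * ((norm w)^2 * (norm a)^4)"
    proof -
      have "(norm ((a \<bullet> w) *\<^sub>R a))^2 = (a \<bullet> w)^2 * (norm a)^2" by (simp add: power_mult_distrib)
      also have "\<dots> \<le> ((norm a)^2 * (norm w)^2) * (norm a)^2"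
        using Cauchy_Schwarz_ineq[of a w] by (intro mult_right_mono) (simp_all add: power2_norm_eq_inner)
      also have "\<dots> = (norm w)^2 * (norm a)^4" by (simp add: algebra_simps flip: power_add)
      finally have "(norm ((a \<bullet> w) *\<^sub>R a))^2 \<le> (norm w)^2 * (norm a)^4" .
      then show ?thesis unfolding m using norm_add_sq[of "H *v w" "- ((a \<bullet> w) *\<^sub>R a)"] by simp
    qed
    have "(norm (transpose (Jmat \<alpha> \<beta> a) *v x))^2 = (norm (u + pv m m))^2"
      unfolding JT_split u_def m_def w_def ..
    also have "\<dots> \<le> 2 * (norm u)^2 + 2 * (norm (pv m m))^2" by (rule norm_add_sq)
    also have "\<dots> = 2 * (norm u)^2 + 4 * (norm m)^2" by (simp add: norm_pv)
    also have "\<dots> \<le> 2 * (norm u)^2 + 4 * (2 * (norm (H *v w))^2 + 2 * ((norm w)^2 * (norm a)^4))"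
      using nm by simp
    finally show ?thesis by (simp add: algebra_simps)
  qed
  then show ?thesis by (metis add.assoc)
qed

lemma entry_J: "(Jmat \<alpha> \<beta> a ** \<Theta> ** transpose (Jmat \<alpha> \<beta> a)) $ i $ j
   = (transpose (Jmat \<alpha> \<beta> a) *v axis i 1) \<bullet> (\<Theta> *v (transpose (Jmat \<alpha> \<beta> a) *v axis j 1))"
  by (simp only: entry_inner[symmetric] qf_sandwich)

lemma cont_JT: "continuous_on UNIV (\<lambda>z. transpose (Jmat \<alpha> \<beta> (fst (z::(real^'d)\<times>real))) *v x)"
  by (simp only: JT_split Em_mv) (intro continuous_intros)

lemma int_bil_J: "integrable \<rho> (\<lambda>z. (transpose (Jmat \<alpha> \<beta> (fst z)) *v x) \<bullet> (\<Theta> *v (transpose (Jmat \<alpha> \<beta> (fst z)) *v y)))"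
proof -
  obtain c0 c1 where cx: "\<And>a. (norm (transpose (Jmat \<alpha> \<beta> a) *v x))^2 \<le> c0 + c1 * (norm a)^4"
    using JT_bound by blast
  obtain d0 d1 where cy: "\<And>a. (norm (transpose (Jmat \<alpha> \<beta> a) *v y))^2 \<le> d0 + d1 * (norm a)^4"
    using JT_bound by blast
  obtain C where C: "C > 0" "\<And>v. norm (\<Theta> *v v) \<le> norm v * C"
    using bounded_linear.pos_bounded[of "\<lambda>v. \<Theta> *v v"] linear_conv_bounded_linear matrix_vector_mul_linear by blast
  have maj: "integrable \<rho> (\<lambda>z. C * ((c0 + d0) + (c1 + d1) * (norm (fst z))^4))"
    using int_norm4 by (intro integrable_mult_right Bochner_Integration.integrable_add integrable_const) auto
  show ?thesis
  proof (rule Bochner_Integration.integrable_bound[OF maj])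
    show "(\<lambda>z. (transpose (Jmat \<alpha> \<beta> (fst z)) *v x) \<bullet> (\<Theta> *v (transpose (Jmat \<alpha> \<beta> (fst z)) *v y))) \<in> borel_measurable \<rho>"
      by (intro meas continuous_intros cont_JT)
    show "AE z in \<rho>. norm ((transpose (Jmat \<alpha> \<beta> (fst z)) *v x) \<bullet> (\<Theta> *v (transpose (Jmat \<alpha> \<beta> (fst z)) *v y)))
       \<le> norm (C * ((c0 + d0) + (c1 + d1) * (norm (fst z))^4))"
    proof (intro AE_I2)
      fix z :: "(real^'d) \<times> real"
      let ?p = "transpose (Jmat \<alpha> \<beta> (fst z)) *v x" and ?q = "transpose (Jmat \<alpha> \<beta> (fst z)) *v y"
      have "norm (?p \<bullet> (\<Theta> *v ?q)) \<le> norm ?p * norm (\<Theta> *v ?q)" by (simp add: Cauchy_Schwarz_ineq2)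
      also have "\<dots> \<le> norm ?p * (norm ?q * C)" using C(2) by (simp add: mult_left_mono)
      also have "\<dots> = C * (norm ?p * norm ?q)" by simp
      also have "\<dots> \<le> C * ((norm ?p)^2 + (norm ?q)^2)"
      proof -
        have sq: "0 \<le> (norm ?p - norm ?q)^2" by simp
        have h1: "2 * (norm ?p * norm ?q) \<le> norm ?p * norm ?p + norm ?q * norm ?q"
          using sq by (simp add: power2_eq_square algebra_simps)
        have h2: "0 \<le> norm ?p * norm ?q" by simp
        have "norm ?p * norm ?q \<le> (norm ?p)^2 + (norm ?q)^2" using h1 h2 unfolding power2_eq_square by linarith
        then show ?thesis using C(1) by (intro mult_left_mono) auto
      qed
      also have "\<dots> \<le> C * ((c0 + d0) + (c1 + d1) * (norm (fst z))^4)"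
        using cx[of "fst z"] cy[of "fst z"] C(1) by (intro mult_left_mono) (auto simp: algebra_simps)
      also have "\<dots> \<le> norm (C * ((c0 + d0) + (c1 + d1) * (norm (fst z))^4))" by simp
      finally show "norm (?p \<bullet> (\<Theta> *v ?q)) \<le> norm (C * ((c0 + d0) + (c1 + d1) * (norm (fst z))^4))" .
    qed
  qed
qed

lemma int_J: "integrable \<rho> (\<lambda>z. Jmat \<alpha> \<beta> (fst z) ** \<Theta> ** transpose (Jmat \<alpha> \<beta> (fst z)))"
  by (rule integrable_mat) (simp only: entry_J int_bil_J)

end

lemma mat_add_r: "(B + C) ** (A::real^'n^'m) = B ** A + C ** (A::real^'n^'m)"
  by (simp add: vec_eq_iff matrix_matrix_mult_def sum.distrib algebra_simps)

lemma qf_sum: "x \<bullet> ((\<Sum>t<(n::nat). Q t) *v x) = (\<Sum>t<n. x \<bullet> (Q t *v (x::real^'n)))"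
  by (induction n) (simp_all add: matrix_vector_mult_add_rdistrib inner_add_right)

lemma linear_transpose: "linear (transpose :: real^'n^'m \<Rightarrow> real^'m^'n)"
  by (rule linearI) (simp_all add: vec_eq_iff transpose_def)

lemma ab_lemma: "(W::'a::ab_group_add) = a + b + c \<Longrightarrow> b = d + e + f \<Longrightarrow> W = (a + d) + e + (c + f)"
  by (simp add: algebra_simps)

context setting begin

abbreviation "T \<equiv> Top \<rho> \<alpha> \<beta>"

lemma Tqf: "y \<bullet> (T \<Theta> *v z) = (\<integral>s. (transpose (Jmat \<alpha> \<beta> (fst s)) *v y) \<bullet> (\<Theta> *v (transpose (Jmat \<alpha> \<beta> (fst s)) *v z)) \<partial>\<rho>)"
  unfolding Top_def using integral_bounded_linear[OF bl_qf[of y z] int_J[of \<Theta>]]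
  by (simp only: qf_sandwich)

lemma T_add: "T (X + Z) = T X + T Z"
  unfolding Top_def
  by (simp add: matrix_add_ldistrib mat_add_r Bochner_Integration.integral_add[OF int_J int_J])

lemma sand_scale: "M ** (c *\<^sub>R X) ** N = c *\<^sub>R (M ** X ** (N::real^'n^'m))"
  by (simp add: vec_eq_iff matrix_matrix_mult_def sum_distrib_left algebra_simps)

lemma T_scale: "T (c *\<^sub>R X) = c *\<^sub>R T X"
  unfolding Top_def sand_scale by simp

lemma T_psd: "(\<And>v. 0 \<le> v \<bullet> (X *v v)) \<Longrightarrow> 0 \<le> x \<bullet> (T X *v x)"
  unfolding Tqf by (rule integral_nonneg_AE) auto

lemma T_sym: "transpose X = X \<Longrightarrow> transpose (T X) = T X"
proof -
  assume s: "transpose X = X"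
  have bl: "bounded_linear (transpose :: real^('d+'d)^('d+'d) \<Rightarrow> _)"
    using linear_transpose linear_conv_bounded_linear by blast
  show ?thesis unfolding Top_def
    using integral_bounded_linear[OF bl int_J[of X]] by (simp add: transpose_sandwich[OF s])
qed

lemma Tn_add: "(T ^^ n) (X + Z) = (T ^^ n) X + (T ^^ n) Z"
  by (induction n) (simp_all add: T_add)

lemma Tn_psd: "(\<And>v. 0 \<le> v \<bullet> (X *v v)) \<Longrightarrow> 0 \<le> x \<bullet> ((T ^^ n) X *v x)"
proof (induction n arbitrary: x)
  case 0 then show ?case by simp
next
  case (Suc n) then show ?case by (simp add: T_psd)
qed

lemma Tn_sym: "transpose X = X \<Longrightarrow> transpose ((T ^^ n) X) = (T ^^ n) X"
  by (induction n) (simp_all add: T_sym)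

definition Lam :: "real^'d \<Rightarrow> real^'d^'d \<Rightarrow> real^('d+'d)" where "Lam w M = pv (- (M *v w)) (- (M *v w))"

lemma Lam_linear: "linear (Lam w)"
  unfolding Lam_def
  by (rule linearI) (simp_all add: pv_add pv_scale matrix_vector_mult_add_rdistrib scaleR_mv algebra_simps)

lemma cross_zero:
  assumes "bounded_linear (\<phi> :: real^('d+'d) \<Rightarrow> real)"
  shows "(\<integral>s. \<phi> (Lam w (Em (fst s))) \<partial>\<rho>) = 0"
proof -
  have bl: "bounded_linear (\<lambda>M. \<phi> (Lam w M))"
    using Lam_linear linear_conv_bounded_linear bounded_linear_compose[OF assms] by (metis linear_conv_bounded_linear)
  have e: "\<phi> (Lam w (Em a)) = \<phi> (Lam w (outer a)) - \<phi> (Lam w H)" for a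
    unfolding Em_def using linear_diff[OF Lam_linear] linear_diff[OF bounded_linear.linear[OF assms]] by metis
  have "(\<integral>s. \<phi> (Lam w (outer (fst s))) \<partial>\<rho>) = \<phi> (Lam w H)"
    unfolding Hmat_def by (rule integral_bounded_linear[OF bl int_outer])
  then show ?thesis
    unfolding e using integrable_bounded_linear[OF bl int_outer]
    by (simp add: Bochner_Integration.integral_diff prob_space)
qed

lemma Y_psd: "0 \<le> v \<bullet> (Y *v v)"
  unfolding Y_qf
  by (rule suminf_nonneg[OF bounded_linear.summable[OF bl_qf summ_N]]) (simp add: Ttil_iter qfN Hpsd)

lemma Y_shift: "(transpose A *v x) \<bullet> (Y *v (transpose A *v x)) = x \<bullet> (Y *v x) - x \<bullet> (Nmat \<rho> \<alpha> \<beta> *v x)"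
proof -
  have s: "summable (\<lambda>t. x \<bullet> ((Ttil \<rho> \<alpha> \<beta> ^^ t) (Nmat \<rho> \<alpha> \<beta>) *v x))"
    by (rule bounded_linear.summable[OF bl_qf summ_N])
  have e: "(transpose A *v x) \<bullet> ((Ttil \<rho> \<alpha> \<beta> ^^ t) (Nmat \<rho> \<alpha> \<beta>) *v (transpose A *v x))
      = x \<bullet> ((Ttil \<rho> \<alpha> \<beta> ^^ Suc t) (Nmat \<rho> \<alpha> \<beta>) *v x)" for t
    unfolding Ttil_iter by (simp only: funpow_Suc_right o_apply)
  show ?thesis unfolding Y_qf e suminf_split_head[OF s] by simp
qed

lemma TY_bound: "x \<bullet> (T Y *v x) \<le> x \<bullet> (Y *v x) - (1/3) * (x \<bullet> (Nmat \<rho> \<alpha> \<beta> *v x))"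
proof -
  define w where "w = \<beta> *\<^sub>R v1 x + \<alpha> *\<^sub>R v2 x"
  define u where "u = transpose A *v x"
  define v where "v s = Lam w (Em (fst s))" for s :: "(real^'d) \<times> real"
  have J: "transpose (Jmat \<alpha> \<beta> (fst s)) *v x = u + v s" for s
    unfolding JT_split u_def v_def Lam_def w_def ..
  define tot where "tot s = (transpose (Jmat \<alpha> \<beta> (fst s)) *v x) \<bullet> (Y *v (transpose (Jmat \<alpha> \<beta> (fst s)) *v x))" for s :: "(real^'d) \<times> real"
  define c1 where "c1 s = u \<bullet> (Y *v v s)" for s
  define c2 where "c2 s = v s \<bullet> (Y *v u)" for s
  define q where "q s = v s \<bullet> (Y *v v s)" for s
  have tot_e: "tot s = u \<bullet> (Y *v u) + c1 s + c2 s + q s" for s :: "(real^'d) \<times> real"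
    unfolding tot_def J c1_def c2_def q_def
    by (simp add: matrix_vector_right_distrib inner_add_left inner_add_right)
  have itot: "integrable \<rho> tot" unfolding tot_def by (rule int_bil_J)
  have blY: "bounded_linear (\<lambda>z. Y *v z)"
    using linear_conv_bounded_linear matrix_vector_mul_linear by blast
  have bl1: "bounded_linear (\<lambda>z. u \<bullet> (Y *v z))"
    using bounded_linear_compose[OF bounded_linear_inner_right[of u] blY] by simp
  have bl2: "bounded_linear (\<lambda>z. z \<bullet> (Y *v u))"
    by (rule bounded_linear_inner_left)
  have blL: "bounded_linear (Lam w)" using Lam_linear linear_conv_bounded_linear by blast
  have ic1: "integrable \<rho> c1"
  proof -
    have e: "c1 = (\<lambda>s. u \<bullet> (Y *v Lam w (outer (fst s))) - u \<bullet> (Y *v Lam w H))"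
      unfolding c1_def v_def Em_def
      by (intro ext) (simp only: linear_diff[OF Lam_linear] matrix_vector_mult_diff_distrib inner_diff_right)
    have bl: "bounded_linear (\<lambda>M. u \<bullet> (Y *v Lam w M))" by (rule bounded_linear_compose[OF bl1 blL])
    have i: "integrable \<rho> (\<lambda>s. u \<bullet> (Y *v Lam w (outer (fst s))))"
      by (rule integrable_bounded_linear[OF bl int_outer])
    show ?thesis unfolding e by (rule Bochner_Integration.integrable_diff[OF i integrable_const])
  qed
  have ic2: "integrable \<rho> c2"
  proof -
    have e: "c2 = (\<lambda>s. Lam w (outer (fst s)) \<bullet> (Y *v u) - Lam w H \<bullet> (Y *v u))"
      unfolding c2_def v_def Em_def
      by (intro ext) (simp only: linear_diff[OF Lam_linear] inner_diff_left)
    have bl: "bounded_linear (\<lambda>M. Lam w M \<bullet> (Y *v u))" by (rule bounded_linear_compose[OF bl2 blL])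
    have i: "integrable \<rho> (\<lambda>s. Lam w (outer (fst s)) \<bullet> (Y *v u))"
      by (rule integrable_bounded_linear[OF bl int_outer])
    show ?thesis unfolding e by (rule Bochner_Integration.integrable_diff[OF i integrable_const])
  qed
  have z1: "integral\<^sup>L \<rho> c1 = 0" unfolding c1_def v_def by (rule cross_zero[OF bl1])
  have z2: "integral\<^sup>L \<rho> c2 = 0" unfolding c2_def v_def by (rule cross_zero[OF bl2])
  have qe: "q = (\<lambda>s::(real^'d)\<times>real. tot s - u \<bullet> (Y *v u) - c1 s - c2 s)" using tot_e by (intro ext) simp
  have iq: "integrable \<rho> q" unfolding qe using itot ic1 ic2 by simp
  have "x \<bullet> (T Y *v x) = integral\<^sup>L \<rho> tot" unfolding Tqf tot_def ..
  also have "\<dots> = u \<bullet> (Y *v u) + integral\<^sup>L \<rho> c1 + integral\<^sup>L \<rho> c2 + integral\<^sup>L \<rho> q"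
    unfolding tot_e using ic1 ic2 iq by (simp add: Bochner_Integration.integral_add prob_space)
  also have "\<dots> = u \<bullet> (Y *v u) + integral\<^sup>L \<rho> q" using z1 z2 by simp
  also have "integral\<^sup>L \<rho> q \<le> integral\<^sup>L \<rho> (gfun w)"
  proof (rule integral_mono[OF iq int_g])
    fix s
    have "q s \<le> (2/3) * (\<gamma> * ((- (Em (fst s) *v w)) \<bullet> (- (Em (fst s) *v w))) + (\<alpha>/\<beta>) * ((- (Em (fst s) *v w)) \<bullet> (K *v (- (Em (fst s) *v w)))))"
      unfolding q_def v_def Lam_def by (rule YB)
    then show "q s \<le> gfun w s" unfolding pw .
  qed
  also have "integral\<^sup>L \<rho> (gfun w) \<le> (2/3) * (w \<bullet> (H *v w))" by (rule integral_g)
  finally have "x \<bullet> (T Y *v x) \<le> u \<bullet> (Y *v u) + (2/3) * (w \<bullet> (H *v w))" by simp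
  moreover have "w \<bullet> (H *v w) = x \<bullet> (Nmat \<rho> \<alpha> \<beta> *v x)" unfolding w_def qfN ..
  ultimately show ?thesis unfolding u_def Y_shift by simp
qed

lemma summ_T: "summable (\<lambda>t. (T ^^ t) (Nmat \<rho> \<alpha> \<beta>))"
proof (rule summable_psd)
  show "(T ^^ t) (Nmat \<rho> \<alpha> \<beta>) $ i $ j = (T ^^ t) (Nmat \<rho> \<alpha> \<beta>) $ j $ i" for t i j
    by (rule sym_entries[OF Tn_sym[OF N_sym]])
  have Npsd: "0 \<le> v \<bullet> (Nmat \<rho> \<alpha> \<beta> *v v)" for v by (simp add: qfN Hpsd)
  show "0 \<le> x \<bullet> ((T ^^ t) (Nmat \<rho> \<alpha> \<beta>) *v x)" for t x by (rule Tn_psd[OF Npsd])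
  define W where "W = 3 *\<^sub>R Y"
  define D where "D = W - T W - Nmat \<rho> \<alpha> \<beta>"
  have Wpsd: "0 \<le> v \<bullet> (W *v v)" for v unfolding W_def by (simp add: scaleR_mv Y_psd)
  have Dpsd: "0 \<le> v \<bullet> (D *v v)" for v
  proof -
    have "v \<bullet> (T W *v v) = 3 * (v \<bullet> (T Y *v v))" unfolding W_def T_scale by (simp add: scaleR_mv)
    then show ?thesis unfolding D_def using TY_bound[of v]
      by (simp add: matrix_vector_mult_diff_rdistrib inner_diff_right W_def scaleR_mv)
  qed
  have ident: "W = (\<Sum>t<n. (T ^^ t) (Nmat \<rho> \<alpha> \<beta>)) + (T ^^ n) W + (\<Sum>t<n. (T ^^ t) D)" for n
  proof (induction n)
    case 0 then show ?case by simp
  next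
    case (Suc n)
    have "(T ^^ n) W = (T ^^ n) (Nmat \<rho> \<alpha> \<beta>) + (T ^^ Suc n) W + (T ^^ n) D"
    proof -
      have "W = Nmat \<rho> \<alpha> \<beta> + T W + D" unfolding D_def by simp
      then have "(T ^^ n) W = (T ^^ n) (Nmat \<rho> \<alpha> \<beta> + T W + D)" by simp
      also have "\<dots> = (T ^^ n) (Nmat \<rho> \<alpha> \<beta>) + (T ^^ n) (T W) + (T ^^ n) D" by (simp add: Tn_add)
      also have "(T ^^ n) (T W) = (T ^^ Suc n) W" by (simp only: funpow_Suc_right o_apply)
      finally show ?thesis .
    qed
    then show ?case using ab_lemma[OF Suc.IH] by (simp only: sum.lessThan_Suc)
  qed
  show "\<exists>B. \<forall>n. (\<Sum>t<n. x \<bullet> ((T ^^ t) (Nmat \<rho> \<alpha> \<beta>) *v x)) \<le> B" for x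
  proof (intro exI allI)
    fix n
    have "x \<bullet> (W *v x) = (\<Sum>t<n. x \<bullet> ((T ^^ t) (Nmat \<rho> \<alpha> \<beta>) *v x)) + x \<bullet> ((T ^^ n) W *v x) + (\<Sum>t<n. x \<bullet> ((T ^^ t) D *v x))"
      by (subst ident[of n]) (simp add: matrix_vector_mult_add_rdistrib inner_add_right qf_sum)
    moreover have "0 \<le> x \<bullet> ((T ^^ n) W *v x)" by (rule Tn_psd[OF Wpsd])
    moreover have "0 \<le> (\<Sum>t<n. x \<bullet> ((T ^^ t) D *v x))" by (intro sum_nonneg Tn_psd[OF Dpsd])
    ultimately show "(\<Sum>t<n. x \<bullet> ((T ^^ t) (Nmat \<rho> \<alpha> \<beta>) *v x)) \<le> x \<bullet> (W *v x)" by linarith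
  qed
qed

lemma main: "((\<alpha> < 1/L \<and> \<beta> < 1/L) \<longrightarrow> inv_exists (Ttil \<rho> \<alpha> \<beta>))
    \<and> (inv_on_exists (Ttil \<rho> \<alpha> \<beta>) (Nmat \<rho> \<alpha> \<beta>)
       \<and> loewner_le (Mop \<rho> \<alpha> \<beta> (inv_apply (Ttil \<rho> \<alpha> \<beta>) (Nmat \<rho> \<alpha> \<beta>)))
                    ((2/3) *\<^sub>R Nmat \<rho> \<alpha> \<beta>)
       \<and> inv_on_exists (Top \<rho> \<alpha> \<beta>) (Nmat \<rho> \<alpha> \<beta>))
    \<and> (inv_on_exists (TtilT \<rho> \<alpha> \<beta>) (Upsilon \<rho>)
       \<and> loewner_le (MopT \<rho> \<alpha> \<beta> (inv_apply (TtilT \<rho> \<alpha> \<beta>) (Upsilon \<rho>)))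
                    ((2/3) *\<^sub>R Upsilon \<rho>))"
  using inv_a summ_N mop_b summ_T summ_U mopT_c unfolding inv_on_exists_def Y_def Y'_def by blast

end


theorem lemma12:
  fixes \<rho> :: "((real^'d) \<times> real) measure"
    and L R \<kappa> \<alpha> \<beta> :: real
  assumes "prob_space \<rho>"
    and "sets \<rho> = sets borel"
    and "integrable \<rho> (\<lambda>z. (norm (fst z))^2)"
    and "invertible (Hmat \<rho>)"
    and "\<exists>v. v \<noteq> 0 \<and> Hmat \<rho> *v v = L *\<^sub>R v"
    and "\<forall>\<mu> v. v \<noteq> 0 \<and> Hmat \<rho> *v v = \<mu> *\<^sub>R v \<longrightarrow> \<mu> \<le> L"
    and "integrable \<rho> (\<lambda>z. (norm (fst z))^2 *\<^sub>R outer (fst z))"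
    and "loewner_le (integral\<^sup>L \<rho> (\<lambda>z. (norm (fst z))^2 *\<^sub>R outer (fst z))) (R^2 *\<^sub>R Hmat \<rho>)"
    and "integrable \<rho> (\<lambda>z. (fst z \<bullet> (matrix_inv (Hmat \<rho>) *v fst z)) *\<^sub>R outer (fst z))"
    and "loewner_le (integral\<^sup>L \<rho> (\<lambda>z. (fst z \<bullet> (matrix_inv (Hmat \<rho>) *v fst z)) *\<^sub>R outer (fst z)))
           (\<kappa> *\<^sub>R Hmat \<rho>)"
    and "\<alpha> > 0" and "\<beta> > 0"
    and "(\<alpha> + 2*\<beta>) * R^2 \<le> 1"
    and "\<alpha> \<le> \<beta> / (2*\<kappa>)"
  shows "((\<alpha> < 1/L \<and> \<beta> < 1/L) \<longrightarrow> inv_exists (Ttil \<rho> \<alpha> \<beta>))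
    \<and> (inv_on_exists (Ttil \<rho> \<alpha> \<beta>) (Nmat \<rho> \<alpha> \<beta>)
       \<and> loewner_le (Mop \<rho> \<alpha> \<beta> (inv_apply (Ttil \<rho> \<alpha> \<beta>) (Nmat \<rho> \<alpha> \<beta>)))
                    ((2/3) *\<^sub>R Nmat \<rho> \<alpha> \<beta>)
       \<and> inv_on_exists (Top \<rho> \<alpha> \<beta>) (Nmat \<rho> \<alpha> \<beta>))
    \<and> (inv_on_exists (TtilT \<rho> \<alpha> \<beta>) (Upsilon \<rho>)
       \<and> loewner_le (MopT \<rho> \<alpha> \<beta> (inv_apply (TtilT \<rho> \<alpha> \<beta>) (Upsilon \<rho>)))
                    ((2/3) *\<^sub>R Upsilon \<rho>))"
proof -
  have "setting \<rho> R \<kappa> \<alpha> \<beta>"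
    unfolding setting_def setting_axioms_def using assms(1-4,7-14) by blast
  then show ?thesis by (rule setting.main)
qed

end
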